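(* Let $(R,\mathfrak m,k)$ be a commutative noetherian local ring. Let $A$ and $L$ be $R$-modules such that $A$ is artinian and $\mathfrak m^n\Gamma_{\mathfrak m}(L)=0$ for some $n\geq 1$. Fix an index $t\geq 0$ such that $\mathfrak m^tA=\mathfrak m^{t+1}A$, and let $s$ be an integer with $s\geq\min(n,t)$. Then $\operatorname{len}_R(\operatorname{Hom}_R(A,L))\leq\beta^R_0(A)\,\operatorname{len}_R(0:_L\mathfrak m^s)$, with the convention $0\cdot\infty=0$.
   Context: $\Gamma_{\mathfrak m}(L)=\{x\in L: \mathfrak m^nx=0 \text{ for } n\gg0\}$; $\beta^R_0(A)=\operatorname{len}_R(k\otimes_RA)$; $(0:_L\mathfrak m^s)=\{x\in L:\mathfrak m^sx=0\}$. *)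

theory Defs
  imports "HOL-Algebra.Algebra" "HOL-Library.Extended_Nat"
begin

definition ideal_power :: "('a, 'b) ring_scheme \<Rightarrow> 'a set \<Rightarrow> nat \<Rightarrow> 'a set" where
  "ideal_power R I k = I [^]\<^bsub>ideals_set R\<^esub> k"

definition mod_ideal_prod :: "('a, 'c) ring_scheme \<Rightarrow> ('a, 'b) module \<Rightarrow> 'a set \<Rightarrow> 'b set \<Rightarrow> 'b set" where
  "mod_ideal_prod R M I N =
     \<Inter>{H. submodule H R M \<and> {a \<odot>\<^bsub>M\<^esub> x | a x. a \<in> I \<and> x \<in> N} \<subseteq> H}"

definition Gamma :: "('a, 'c) ring_scheme \<Rightarrow> 'a set \<Rightarrow> ('a, 'b) module \<Rightarrow> 'b set" where
  "Gamma R m L = {x \<in> carrier L. \<exists>k. \<forall>a \<in> ideal_power R m k. a \<odot>\<^bsub>L\<^esub> x = \<zero>\<^bsub>L\<^esub>}"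

definition annihilated :: "('a, 'b) module \<Rightarrow> 'a set \<Rightarrow> 'b set" where
  "annihilated L I = {x \<in> carrier L. \<forall>a \<in> I. a \<odot>\<^bsub>L\<^esub> x = \<zero>\<^bsub>L\<^esub>}"

definition subquot_length :: "('a, 'c) ring_scheme \<Rightarrow> ('a, 'b) module \<Rightarrow> 'b set \<Rightarrow> 'b set \<Rightarrow> enat" where
  "subquot_length R M Lo Hi = Sup {enat k | k. \<exists>f :: nat \<Rightarrow> 'b set.
      (\<forall>i\<le>k. submodule (f i) R M \<and> Lo \<subseteq> f i \<and> f i \<subseteq> Hi) \<and> (\<forall>i<k. f i \<subset> f (Suc i))}"

definition mod_length :: "('a, 'c) ring_scheme \<Rightarrow> ('a, 'b) module \<Rightarrow> 'b set \<Rightarrow> enat" where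
  "mod_length R M N = subquot_length R M {\<zero>\<^bsub>M\<^esub>} N"

text \<open>beta_0(A) = len(k \<otimes> A) = len(A / m A).\<close>
definition beta0 :: "('a, 'c) ring_scheme \<Rightarrow> 'a set \<Rightarrow> ('a, 'b) module \<Rightarrow> enat" where
  "beta0 R m A = subquot_length R A (mod_ideal_prod R A m (carrier A)) (carrier A)"

definition Hom_mod :: "('a, 'c) ring_scheme \<Rightarrow> ('a, 'd) module \<Rightarrow> ('a, 'b) module \<Rightarrow> ('a, 'd \<Rightarrow> 'b) module" where
  "Hom_mod R A L =
    \<lparr> partial_object.carrier = {f. f \<in> carrier A \<rightarrow> carrier L \<and> f \<in> extensional (carrier A) \<and>
                    (\<forall>x\<in>carrier A. \<forall>y\<in>carrier A. f (x \<oplus>\<^bsub>A\<^esub> y) = f x \<oplus>\<^bsub>L\<^esub> f y) \<and>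
                    (\<forall>a\<in>carrier R. \<forall>x\<in>carrier A. f (a \<odot>\<^bsub>A\<^esub> x) = a \<odot>\<^bsub>L\<^esub> f x)},
      monoid.mult = (\<lambda>f g. undefined),
      monoid.one = undefined,
      ring.zero = (\<lambda>x\<in>carrier A. \<zero>\<^bsub>L\<^esub>),
      ring.add = (\<lambda>f g. \<lambda>x\<in>carrier A. f x \<oplus>\<^bsub>L\<^esub> g x),
      module.smult = (\<lambda>a f. \<lambda>x\<in>carrier A. a \<odot>\<^bsub>L\<^esub> f x) \<rparr>"

definition artinian_module :: "('a, 'c) ring_scheme \<Rightarrow> ('a, 'b) module \<Rightarrow> bool" where
  "artinian_module R M \<longleftrightarrow> module R M \<and>
     \<not> (\<exists>f :: nat \<Rightarrow> 'b set. (\<forall>i. submodule (f i) R M) \<and> (\<forall>i. f (Suc i) \<subset> f i))"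

definition noeth_local_ring :: "('a, 'c) ring_scheme \<Rightarrow> 'a set \<Rightarrow> bool" where
  "noeth_local_ring R m \<longleftrightarrow> cring R \<and> noetherian_ring R \<and> maximalideal m R \<and>
     (\<forall>I. maximalideal I R \<longrightarrow> I = m)"

end

theory Submission
  imports Defs
begin


locale umod = module R M for R :: "('a, 'c) ring_scheme" and M :: "('a, 'b) module"

lemma (in module) submod_zero: "submodule H R M \<Longrightarrow> \<zero>\<^bsub>M\<^esub> \<in> H"
  using subgroup.one_closed[OF submodule.axioms(1)] by fastforce

lemma (in module) submod_facts:
  assumes "submodule H R M"
  shows "H \<subseteq> carrier M" "\<zero>\<^bsub>M\<^esub> \<in> H"
    "\<And>a. a \<in> H \<Longrightarrow> \<ominus>\<^bsub>M\<^esub> a \<in> H"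
    "\<And>a b. \<lbrakk>a \<in> carrier R; b \<in> H\<rbrakk> \<Longrightarrow> a \<odot>\<^bsub>M\<^esub> b \<in> H"
    "\<And> a b. \<lbrakk>a \<in> H ; b \<in> H\<rbrakk> \<Longrightarrow> a \<oplus>\<^bsub>M\<^esub> b \<in> H"
  using submoduleE[OF assms] submod_zero[OF assms] by auto

lemma (in module) submod_Inter:
  assumes "\<And>H. H \<in> S \<Longrightarrow> submodule H R M" "S \<noteq> {}"
  shows "submodule (\<Inter>S) R M"
proof (rule submoduleI)
  show "\<Inter> S \<subseteq> carrier M" using assms submod_facts(1) by blast
  show "\<zero>\<^bsub>M\<^esub> \<in> \<Inter> S" using assms submod_facts(2) by blast
  show "\<ominus>\<^bsub>M\<^esub> a \<in> \<Inter> S" if "a \<in> \<Inter> S" for a using that assms submod_facts(3) by blast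
  show "a \<oplus>\<^bsub>M\<^esub> b \<in> \<Inter> S" if "a \<in> \<Inter> S" "b \<in> \<Inter> S" for a b
    using that assms submod_facts(5) by blast
  show "a \<odot>\<^bsub>M\<^esub> x \<in> \<Inter> S" if "a \<in> carrier R" "x \<in> \<Inter> S" for a x
    using that assms submod_facts(4) by blast
qed

lemma (in umod) mip_submodule:
  assumes "I \<subseteq> carrier R" "N \<subseteq> carrier M"
  shows "submodule (mod_ideal_prod R M I N) R M"
  unfolding mod_ideal_prod_def
proof (rule submod_Inter)
  show "{H. submodule H R M \<and> {a \<odot>\<^bsub>M\<^esub> x |a x. a \<in> I \<and> x \<in> N} \<subseteq> H} \<noteq> {}"
    using carrier_is_submodule assms by blast
qed auto

lemma (in umod) mip_prod:
  "a \<in> I \<Longrightarrow> x \<in> N \<Longrightarrow> a \<odot>\<^bsub>M\<^esub> x \<in> mod_ideal_prod R M I N"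
  unfolding mod_ideal_prod_def by blast

lemma (in umod) mip_min:
  "submodule H R M \<Longrightarrow> (\<And>a x. a \<in> I \<Longrightarrow> x \<in> N \<Longrightarrow> a \<odot>\<^bsub>M\<^esub> x \<in> H) \<Longrightarrow> mod_ideal_prod R M I N \<subseteq> H"
  unfolding mod_ideal_prod_def by blast

lemma (in umod) mip_carrier:
  assumes "I \<subseteq> carrier R" "N \<subseteq> carrier M"
  shows "mod_ideal_prod R M I N \<subseteq> carrier M"
  using submod_facts(1)[OF mip_submodule[OF assms]] .

lemma (in umod) mip_mono:
  assumes "I \<subseteq> carrier R" "N \<subseteq> carrier M" "I' \<subseteq> I" "N' \<subseteq> N"
  shows "mod_ideal_prod R M I' N' \<subseteq> mod_ideal_prod R M I N"
  by (rule mip_min[OF mip_submodule[OF assms(1,2)]]) (use assms mip_prod in blast)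

lemma (in umod) mip_one:
  assumes "N \<subseteq> carrier M"
  shows "N \<subseteq> mod_ideal_prod R M (carrier R) N"
proof
  fix x assume "x \<in> N"
  then have "\<one>\<^bsub>R\<^esub> \<odot>\<^bsub>M\<^esub> x \<in> mod_ideal_prod R M (carrier R) N" by (intro mip_prod) auto
  with \<open>x \<in> N\<close> assms show "x \<in> mod_ideal_prod R M (carrier R) N" by auto
qed

lemma (in umod) mip_assoc1:
  assumes I: "ideal I R" and J: "ideal J R" and N: "N \<subseteq> carrier M"
  shows "mod_ideal_prod R M (ideal_prod R I J) N \<subseteq> mod_ideal_prod R M I (mod_ideal_prod R M J N)"
proof -
  have Ic: "I \<subseteq> carrier R" and Jc: "J \<subseteq> carrier R" using ideal.Icarr[OF I] ideal.Icarr[OF J] by auto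
  have JN: "mod_ideal_prod R M J N \<subseteq> carrier M" by (rule mip_carrier[OF Jc N])
  let ?H = "mod_ideal_prod R M I (mod_ideal_prod R M J N)"
  have H: "submodule ?H R M" by (rule mip_submodule[OF Ic JN])
  have "c \<odot>\<^bsub>M\<^esub> x \<in> ?H" if c: "c \<in> ideal_prod R I J" and x: "x \<in> N" for c x
    using c
  proof (induct c rule: ideal_prod.induct)
    case (prod i j)
    then have "i \<otimes>\<^bsub>R\<^esub> j \<odot>\<^bsub>M\<^esub> x = i \<odot>\<^bsub>M\<^esub> (j \<odot>\<^bsub>M\<^esub> x)"
      using Ic Jc x N by (intro smult_assoc1) auto
    moreover have "j \<odot>\<^bsub>M\<^esub> x \<in> mod_ideal_prod R M J N" using prod x by (intro mip_prod)
    ultimately show ?case using prod by (simp add: mip_prod)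
  next
    case (sum s1 s2)
    have "s1 \<in> carrier R" "s2 \<in> carrier R" using sum ideal_prod_in_carrier[OF I J] by auto
    then have "(s1 \<oplus>\<^bsub>R\<^esub> s2) \<odot>\<^bsub>M\<^esub> x = s1 \<odot>\<^bsub>M\<^esub> x \<oplus>\<^bsub>M\<^esub> s2 \<odot>\<^bsub>M\<^esub> x"
      using x N by (intro smult_l_distr) auto
    then show ?case using sum submod_facts(5)[OF H] by simp
  qed
  then show ?thesis by (intro mip_min[OF H])
qed

lemma (in umod) mip_assoc2:
  assumes I: "ideal I R" and J: "ideal J R" and N: "N \<subseteq> carrier M"
  shows "mod_ideal_prod R M I (mod_ideal_prod R M J N) \<subseteq> mod_ideal_prod R M (ideal_prod R I J) N"
proof -
  have Ic: "I \<subseteq> carrier R" and Jc: "J \<subseteq> carrier R" using ideal.Icarr[OF I] ideal.Icarr[OF J] by auto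
  have IJc: "ideal_prod R I J \<subseteq> carrier R" by (rule ideal_prod_in_carrier[OF I J])
  let ?H = "mod_ideal_prod R M (ideal_prod R I J) N"
  have H: "submodule ?H R M" by (rule mip_submodule[OF IJc N])
  let ?K = "{y \<in> carrier M. \<forall>a\<in>I. a \<odot>\<^bsub>M\<^esub> y \<in> ?H}"
  have K: "submodule ?K R M"
  proof (rule submoduleI)
    show "?K \<subseteq> carrier M" by auto
    show "\<zero>\<^bsub>M\<^esub> \<in> ?K" using Ic submod_facts(2)[OF H] by auto
    show "\<ominus>\<^bsub>M\<^esub> y \<in> ?K" if "y \<in> ?K" for y
      using that Ic submod_facts(3)[OF H] by (auto simp: smult_r_minus)
    show "y \<oplus>\<^bsub>M\<^esub> z \<in> ?K" if "y \<in> ?K" "z \<in> ?K" for y z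
      using that Ic submod_facts(5)[OF H] by (auto simp: smult_r_distr)
    show "c \<odot>\<^bsub>M\<^esub> y \<in> ?K" if "c \<in> carrier R" "y \<in> ?K" for c y
    proof -
      have "a \<odot>\<^bsub>M\<^esub> (c \<odot>\<^bsub>M\<^esub> y) = c \<odot>\<^bsub>M\<^esub> (a \<odot>\<^bsub>M\<^esub> y)" if "a \<in> I" for a
        using that \<open>c \<in> carrier R\<close> \<open>y \<in> ?K\<close> Ic
        by (metis (no_types, lifting) R.m_comm mem_Collect_eq smult_assoc1 subsetD)
      then show ?thesis using that submod_facts(4)[OF H] by auto
    qed
  qed
  have "mod_ideal_prod R M J N \<subseteq> ?K"
  proof (rule mip_min[OF K])
    fix b x assume b: "b \<in> J" and x: "x \<in> N"
    have "a \<odot>\<^bsub>M\<^esub> (b \<odot>\<^bsub>M\<^esub> x) \<in> ?H" if a: "a \<in> I" for a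
    proof -
      have "a \<odot>\<^bsub>M\<^esub> (b \<odot>\<^bsub>M\<^esub> x) = (a \<otimes>\<^bsub>R\<^esub> b) \<odot>\<^bsub>M\<^esub> x"
        using a b x Ic Jc N by (intro smult_assoc1[symmetric]) auto
      moreover have "a \<otimes>\<^bsub>R\<^esub> b \<in> ideal_prod R I J" using a b by (rule ideal_prod.prod)
      ultimately show ?thesis using x by (simp add: mip_prod)
    qed
    then show "b \<odot>\<^bsub>M\<^esub> x \<in> ?K" using b x Jc N by auto
  qed
  then show ?thesis by (intro mip_min[OF H]) auto
qed


lemma (in cring) ipow_0 [simp]: "ideal_power R m 0 = carrier R"
  by (simp add: ideal_power_def ideals_set_def)

lemma (in cring) ipow_Suc: "ideal_power R m (Suc k) = ideal_prod R (ideal_power R m k) m"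
  by (simp add: ideal_power_def ideals_set_def)

lemma (in cring) ipow_ideal: "ideal m R \<Longrightarrow> ideal (ideal_power R m k) R"
  by (induct k) (auto simp: ipow_Suc oneideal intro: ideal_prod_is_ideal)

lemma (in cring) ipow_carrier: "ideal m R \<Longrightarrow> ideal_power R m k \<subseteq> carrier R"
  using ideal.Icarr[OF ipow_ideal] by auto

lemma (in cring) ipow_Suc_sub: "ideal m R \<Longrightarrow> ideal_power R m (Suc k) \<subseteq> ideal_power R m k"
  using ideal_prod_inter[OF ipow_ideal] by (auto simp: ipow_Suc)

lemma (in cring) ipow_antimono: "ideal m R \<Longrightarrow> k \<le> l \<Longrightarrow> ideal_power R m l \<subseteq> ideal_power R m k"
proof (induct l)
  case 0 then show ?case by simp
next
  case (Suc l)
  then show ?case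
    using ipow_Suc_sub[OF Suc(2), of l] by (cases "k = Suc l") auto
qed

lemma (in cring) ipow_add: "ideal m R \<Longrightarrow> ideal_power R m (j + k) = ideal_prod R (ideal_power R m j) (ideal_power R m k)"
proof -
  assume m: "ideal m R"
  interpret IS: comm_monoid "ideals_set R" by (rule ideals_set_is_comm_monoid)
  have "m \<in> carrier (ideals_set R)" using m by (simp add: ideals_set_def)
  then have "m [^]\<^bsub>ideals_set R\<^esub> j \<otimes>\<^bsub>ideals_set R\<^esub> m [^]\<^bsub>ideals_set R\<^esub> k = m [^]\<^bsub>ideals_set R\<^esub> (j + k)"
    by (rule IS.nat_pow_mult)
  then show ?thesis by (simp add: ideal_power_def ideals_set_def)
qed

lemma (in cring) ipow_prod_mem:
  "ideal m R \<Longrightarrow> a \<in> ideal_power R m k \<Longrightarrow> b \<in> m \<Longrightarrow> a \<otimes> b \<in> ideal_power R m (Suc k)"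
  by (simp add: ipow_Suc ideal_prod.prod)

lemma Hom_carrier:
  "f \<in> carrier (Hom_mod R A L) \<longleftrightarrow> f \<in> carrier A \<rightarrow> carrier L \<and> f \<in> extensional (carrier A) \<and>
      (\<forall>x\<in>carrier A. \<forall>y\<in>carrier A. f (x \<oplus>\<^bsub>A\<^esub> y) = f x \<oplus>\<^bsub>L\<^esub> f y) \<and>
      (\<forall>a\<in>carrier R. \<forall>x\<in>carrier A. f (a \<odot>\<^bsub>A\<^esub> x) = a \<odot>\<^bsub>L\<^esub> f x)"
  by (simp add: Hom_mod_def)

lemma Hom_zero: "\<zero>\<^bsub>Hom_mod R A L\<^esub> = (\<lambda>x\<in>carrier A. \<zero>\<^bsub>L\<^esub>)"
  by (simp add: Hom_mod_def)
lemma Hom_add: "f \<oplus>\<^bsub>Hom_mod R A L\<^esub> g = (\<lambda>x\<in>carrier A. f x \<oplus>\<^bsub>L\<^esub> g x)"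
  by (simp add: Hom_mod_def)
lemma Hom_smult: "a \<odot>\<^bsub>Hom_mod R A L\<^esub> f = (\<lambda>x\<in>carrier A. a \<odot>\<^bsub>L\<^esub> f x)"
  by (simp add: Hom_mod_def)

locale twomod = A: umod R A + L: umod R L
  for R :: "('a, 'c) ring_scheme" and A :: "('a, 'd) module" and L :: "('a, 'b) module"

context twomod begin

abbreviation "H \<equiv> Hom_mod R A L"

lemma hom_closed: "f \<in> carrier H \<Longrightarrow> x \<in> carrier A \<Longrightarrow> f x \<in> carrier L"
  by (auto simp: Hom_carrier)

lemma hom_add: "f \<in> carrier H \<Longrightarrow> x \<in> carrier A \<Longrightarrow> y \<in> carrier A \<Longrightarrow> f (x \<oplus>\<^bsub>A\<^esub> y) = f x \<oplus>\<^bsub>L\<^esub> f y"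
  by (auto simp: Hom_carrier)

lemma hom_smult: "f \<in> carrier H \<Longrightarrow> a \<in> carrier R \<Longrightarrow> x \<in> carrier A \<Longrightarrow> f (a \<odot>\<^bsub>A\<^esub> x) = a \<odot>\<^bsub>L\<^esub> f x"
  by (auto simp: Hom_carrier)

lemma hom_zero: "f \<in> carrier H \<Longrightarrow> f \<zero>\<^bsub>A\<^esub> = \<zero>\<^bsub>L\<^esub>"
proof -
  assume f: "f \<in> carrier H"
  have "f \<zero>\<^bsub>A\<^esub> = f (\<zero>\<^bsub>R\<^esub> \<odot>\<^bsub>A\<^esub> \<zero>\<^bsub>A\<^esub>)" by simp
  also have "\<dots> = \<zero>\<^bsub>R\<^esub> \<odot>\<^bsub>L\<^esub> f \<zero>\<^bsub>A\<^esub>" using f by (intro hom_smult) auto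
  also have "\<dots> = \<zero>\<^bsub>L\<^esub>" using f hom_closed by simp
  finally show ?thesis .
qed

lemma hom_neg: "f \<in> carrier H \<Longrightarrow> x \<in> carrier A \<Longrightarrow> f (\<ominus>\<^bsub>A\<^esub> x) = \<ominus>\<^bsub>L\<^esub> f x"
proof -
  assume f: "f \<in> carrier H" and x: "x \<in> carrier A"
  have "f (\<ominus>\<^bsub>A\<^esub> x) = f ((\<ominus>\<^bsub>R\<^esub> \<one>\<^bsub>R\<^esub>) \<odot>\<^bsub>A\<^esub> x)" using x by (simp add: A.smult_l_minus)
  also have "\<dots> = (\<ominus>\<^bsub>R\<^esub> \<one>\<^bsub>R\<^esub>) \<odot>\<^bsub>L\<^esub> f x" using f x by (intro hom_smult) auto
  also have "\<dots> = \<ominus>\<^bsub>L\<^esub> f x" using f x hom_closed by (simp add: L.smult_l_minus)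
  finally show ?thesis .
qed

lemma Hom_add_closed: "f \<in> carrier H \<Longrightarrow> g \<in> carrier H \<Longrightarrow> f \<oplus>\<^bsub>H\<^esub> g \<in> carrier H"
  unfolding Hom_add
  apply (subst Hom_carrier)
  apply (intro conjI ballI)
  apply (auto simp: hom_closed hom_add hom_smult L.smult_r_distr)
  apply (simp add: L.a_ac hom_closed)
  done


lemma Hom_smult_closed: "a \<in> carrier R \<Longrightarrow> f \<in> carrier H \<Longrightarrow> a \<odot>\<^bsub>H\<^esub> f \<in> carrier H"
  unfolding Hom_smult
  apply (subst Hom_carrier)
  apply (intro conjI ballI)
  apply (auto simp: hom_closed hom_add hom_smult L.smult_r_distr)
  apply (simp add: hom_closed flip: L.smult_assoc1)
  apply (simp add: A.R.m_comm)
  done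

lemma Hom_zero_closed: "\<zero>\<^bsub>H\<^esub> \<in> carrier H"
  unfolding Hom_zero by (subst Hom_carrier) auto

definition hneg where "hneg f = (\<lambda>x\<in>carrier A. \<ominus>\<^bsub>L\<^esub> f x)"

lemma hneg_closed: "f \<in> carrier H \<Longrightarrow> hneg f \<in> carrier H"
  unfolding hneg_def
  apply (subst Hom_carrier)
  apply (intro conjI ballI)
  apply (auto simp: hom_closed hom_add hom_smult L.smult_r_minus)
  apply (simp add: hom_closed L.minus_add)
  done

lemma hom_eqI: "f \<in> carrier H \<Longrightarrow> g \<in> carrier H \<Longrightarrow> (\<And>x. x \<in> carrier A \<Longrightarrow> f x = g x) \<Longrightarrow> f = g"
  by (auto simp: Hom_carrier intro: extensionalityI)

lemma Hom_abelian: "abelian_group H"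
proof (rule abelian_groupI)
  show "x \<oplus>\<^bsub>H\<^esub> y \<in> carrier H" if "x \<in> carrier H" "y \<in> carrier H" for x y
    using that by (rule Hom_add_closed)
  show "\<zero>\<^bsub>H\<^esub> \<in> carrier H" by (rule Hom_zero_closed)
  show "x \<oplus>\<^bsub>H\<^esub> y \<oplus>\<^bsub>H\<^esub> z = x \<oplus>\<^bsub>H\<^esub> (y \<oplus>\<^bsub>H\<^esub> z)"
    if "x \<in> carrier H" "y \<in> carrier H" "z \<in> carrier H" for x y z
    using that by (intro hom_eqI Hom_add_closed) (auto simp: Hom_add hom_closed L.a_ac)
  show "x \<oplus>\<^bsub>H\<^esub> y = y \<oplus>\<^bsub>H\<^esub> x" if "x \<in> carrier H" "y \<in> carrier H" for x y
    using that by (intro hom_eqI Hom_add_closed) (auto simp: Hom_add hom_closed L.a_ac)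
  show "\<zero>\<^bsub>H\<^esub> \<oplus>\<^bsub>H\<^esub> x = x" if "x \<in> carrier H" for x
    using that by (intro hom_eqI Hom_add_closed Hom_zero_closed) (auto simp: Hom_add Hom_zero hom_closed)
  show "\<exists>y\<in>carrier H. y \<oplus>\<^bsub>H\<^esub> x = \<zero>\<^bsub>H\<^esub>" if "x \<in> carrier H" for x
  proof (intro bexI)
    show "hneg x \<in> carrier H" using that by (rule hneg_closed)
    show "hneg x \<oplus>\<^bsub>H\<^esub> x = \<zero>\<^bsub>H\<^esub>"
      using that by (intro hom_eqI Hom_add_closed Hom_zero_closed hneg_closed)
         (auto simp: Hom_add Hom_zero hneg_def hom_closed L.l_neg)
  qed
qed

lemma Hom_module: "module R H"
proof (rule moduleI)
  show "cring R" by (rule A.is_cring)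
  show "abelian_group H" by (rule Hom_abelian)
  show "a \<odot>\<^bsub>H\<^esub> x \<in> carrier H" if "a \<in> carrier R" "x \<in> carrier H" for a x
    using that by (rule Hom_smult_closed)
  show "(a \<oplus>\<^bsub>R\<^esub> b) \<odot>\<^bsub>H\<^esub> x = a \<odot>\<^bsub>H\<^esub> x \<oplus>\<^bsub>H\<^esub> b \<odot>\<^bsub>H\<^esub> x"
    if "a \<in> carrier R" "b \<in> carrier R" "x \<in> carrier H" for a b x
    using that by (intro hom_eqI Hom_add_closed Hom_smult_closed A.R.a_closed)
      (auto simp: Hom_add Hom_smult hom_closed L.smult_l_distr)
  show "a \<odot>\<^bsub>H\<^esub> (x \<oplus>\<^bsub>H\<^esub> y) = a \<odot>\<^bsub>H\<^esub> x \<oplus>\<^bsub>H\<^esub> a \<odot>\<^bsub>H\<^esub> y"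
    if "a \<in> carrier R" "x \<in> carrier H" "y \<in> carrier H" for a x y
    using that by (intro hom_eqI Hom_add_closed Hom_smult_closed)
      (auto simp: Hom_add Hom_smult hom_closed L.smult_r_distr)
  show "(a \<otimes>\<^bsub>R\<^esub> b) \<odot>\<^bsub>H\<^esub> x = a \<odot>\<^bsub>H\<^esub> (b \<odot>\<^bsub>H\<^esub> x)"
    if "a \<in> carrier R" "b \<in> carrier R" "x \<in> carrier H" for a b x
    using that by (intro hom_eqI Hom_add_closed Hom_smult_closed A.R.m_closed)
      (auto simp: Hom_add Hom_smult hom_closed L.smult_assoc1)
  show "\<one>\<^bsub>R\<^esub> \<odot>\<^bsub>H\<^esub> x = x" if "x \<in> carrier H" for x
    using that by (intro hom_eqI Hom_smult_closed A.R.one_closed)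
      (auto simp: Hom_smult hom_closed)
qed

lemma Hom_neg: "f \<in> carrier H \<Longrightarrow> \<ominus>\<^bsub>H\<^esub> f = hneg f"
proof -
  assume f: "f \<in> carrier H"
  interpret HM: abelian_group H by (rule Hom_abelian)
  show ?thesis
  proof (rule HM.minus_equality)
    show "hneg f \<oplus>\<^bsub>H\<^esub> f = \<zero>\<^bsub>H\<^esub>"
      using f by (intro hom_eqI Hom_add_closed Hom_zero_closed hneg_closed)
         (auto simp: Hom_add Hom_zero hneg_def hom_closed L.l_neg)
  qed (use f hneg_closed in auto)
qed

end


lemma (in cring) exists_maximal:
  assumes I: "ideal I R" and one: "\<one> \<notin> I"
  shows "\<exists>M. maximalideal M R \<and> I \<subseteq> M"
proof -
  define S where "S = {J. ideal J R \<and> I \<subseteq> J \<and> \<one> \<notin> J}"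
  have "\<exists>MM\<in>S. \<forall>Y. Y \<in> S \<longrightarrow> MM \<subseteq> Y \<longrightarrow> Y = MM"
  proof (rule subset_Zorn[simplified Ball_def, rule_format])
    fix C assume C: "subset.chain S C"
    show "\<exists>U\<in>S. \<forall>Z. Z \<in> C \<longrightarrow> Z \<subseteq> U"
    proof (cases "C = {}")
      case True
      then show ?thesis using I one by (auto simp: S_def)
    next
      case False
      have ch: "subset.chain {J. ideal J R} C" using C unfolding pred_on.chain_def S_def by auto
      have "ideal (\<Union>C) R" using chain_Union_is_ideal[OF ch] False by simp
      moreover have "I \<subseteq> \<Union>C"
      proof -
        from False obtain J where J: "J \<in> C" by auto
        then have "I \<subseteq> J" using C unfolding pred_on.chain_def S_def by auto
        then show ?thesis using J by auto
      qed
      moreover have "\<one> \<notin> \<Union>C" using C unfolding pred_on.chain_def S_def by auto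
      ultimately show ?thesis by (auto simp: S_def)
    qed
  qed
  then obtain M where M: "ideal M R" "I \<subseteq> M" "\<one> \<notin> M" and mx: "\<And>Y. Y \<in> S \<Longrightarrow> M \<subseteq> Y \<Longrightarrow> Y = M"
    by (auto simp: S_def)
  have "maximalideal M R"
  proof (rule maximalidealI)
    show "ideal M R" by fact
    show "carrier R \<noteq> M" using M(3) by auto
    fix J assume J: "ideal J R" "M \<subseteq> J" "J \<subseteq> carrier R"
    show "J = M \<or> J = carrier R"
    proof (cases "\<one> \<in> J")
      case True then show ?thesis using ideal.one_imp_carrier[OF J(1)] by auto
    next
      case False then show ?thesis using mx[of J] J M by (auto simp: S_def)
    qed
  qed
  then show ?thesis using M by auto
qed

lemma (in cring) four_sum:
  "a \<in> carrier R \<Longrightarrow> b \<in> carrier R \<Longrightarrow> c \<in> carrier R \<Longrightarrow> d \<in> carrier R \<Longrightarrow>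
   a \<oplus> b \<oplus> (c \<oplus> d) = a \<oplus> c \<oplus> (b \<oplus> d)"
  by (simp add: a_ac)

locale lring = cring R for R :: "('a, 'c) ring_scheme" (structure) +
  fixes m assumes m_max: "maximalideal m R" and m_uniq: "\<And>I. maximalideal I R \<Longrightarrow> I = m"
begin

lemma m_ideal: "ideal m R" using m_max by (rule maximalideal.axioms(1))

lemma m_carr: "m \<subseteq> carrier R" using ideal.Icarr[OF m_ideal] by auto

lemma one_notin_m: "\<one> \<notin> m"
  using ideal.one_imp_carrier[OF m_ideal] maximalideal.I_notcarr[OF m_max] by auto

lemma unit_1_minus:
  assumes c: "c \<in> m" shows "\<one> \<ominus> c \<in> Units R"
proof (rule ccontr)
  assume nu: "\<one> \<ominus> c \<notin> Units R"
  have cc: "c \<in> carrier R" using c m_carr by auto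
  let ?u = "\<one> \<ominus> c"
  have uc: "?u \<in> carrier R" using cc by simp
  have I: "ideal (PIdl ?u) R" using cgenideal_ideal[OF uc] .
  have "\<one> \<notin> PIdl ?u"
  proof
    assume "\<one> \<in> PIdl ?u"
    then obtain y where y: "y \<in> carrier R" "\<one> = y \<otimes> ?u" unfolding cgenideal_def by auto
    then have "?u \<in> Units R" using uc unfolding Units_def by (auto simp: m_comm intro!: bexI[of _ y])
    then show False using nu by simp
  qed
  then obtain M where M: "maximalideal M R" "PIdl ?u \<subseteq> M" using exists_maximal[OF I] by auto
  have "M = m" using M(1) by (rule m_uniq)
  moreover have "?u \<in> PIdl ?u" using cgenideal_self[OF uc] .
  ultimately have "?u \<in> m" using M by auto
  then have "?u \<oplus> c \<in> m" using c by (rule additive_subgroup.a_closed[OF ideal.axioms(1)[OF m_ideal]])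
  moreover have "?u \<oplus> c = \<one>" using cc by (simp add: minus_eq a_assoc l_neg)
  ultimately show False using one_notin_m by simp
qed

end

locale lmod = lring R m + umod R M
  for R :: "('a, 'c) ring_scheme" (structure) and m and M :: "('a, 'b) module"
begin

lemma Idl_empty: "Idl {} = {\<zero>}"
proof
  show "Idl {} \<subseteq> {\<zero>}" by (rule genideal_minimal[OF zeroideal]) auto
  show "{\<zero>} \<subseteq> Idl {}" using additive_subgroup.zero_closed[OF ideal.axioms(1)[OF genideal_ideal]] by auto
qed

lemma Idl_insert_decomp:
  assumes h: "h \<in> carrier R" and G: "G \<subseteq> carrier R" and a: "a \<in> Idl (insert h G)"
  shows "\<exists>r a'. r \<in> carrier R \<and> a' \<in> Idl G \<and> a = r \<otimes> h \<oplus> a'"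
proof -
  have I1: "ideal (PIdl h) R" by (rule cgenideal_ideal[OF h])
  have I2: "ideal (Idl G) R" by (rule genideal_ideal[OF G])
  have I: "ideal (PIdl h <+> Idl G) R" by (rule add_ideals[OF I1 I2])
  have "insert h G \<subseteq> PIdl h <+> Idl G"
  proof
    fix g assume "g \<in> insert h G"
    then show "g \<in> PIdl h <+> Idl G"
    proof
      assume "g = h"
      moreover have "h \<in> PIdl h" by (rule cgenideal_self[OF h])
      moreover have "\<zero> \<in> Idl G" using additive_subgroup.zero_closed[OF ideal.axioms(1)[OF I2]] .
      ultimately show ?thesis using h unfolding set_add_def' by force
    next
      assume g: "g \<in> G"
      then have "g \<in> Idl G" using genideal_self[OF G] by auto
      moreover have "\<zero> \<in> PIdl h" using additive_subgroup.zero_closed[OF ideal.axioms(1)[OF I1]] .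
      ultimately show ?thesis using g G unfolding set_add_def' by force
    qed
  qed
  then have "Idl (insert h G) \<subseteq> PIdl h <+> Idl G" by (rule genideal_minimal[OF I])
  then have "a \<in> PIdl h <+> Idl G" using a by auto
  then show ?thesis unfolding set_add_def' cgenideal_def by auto
qed


lemma smult_1_minus:
  assumes c: "c \<in> carrier R" and y: "y \<in> carrier M"
  shows "(\<one> \<ominus> c) \<odot>\<^bsub>M\<^esub> y = y \<ominus>\<^bsub>M\<^esub> c \<odot>\<^bsub>M\<^esub> y"
proof -
  have "(\<one> \<ominus> c) \<odot>\<^bsub>M\<^esub> y = \<one> \<odot>\<^bsub>M\<^esub> y \<oplus>\<^bsub>M\<^esub> (\<ominus> c) \<odot>\<^bsub>M\<^esub> y"
    unfolding a_minus_def using c y by (intro smult_l_distr) auto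
  also have "\<dots> = y \<ominus>\<^bsub>M\<^esub> c \<odot>\<^bsub>M\<^esub> y"
    using c y by (simp add: smult_l_minus M.minus_eq)
  finally show ?thesis .
qed

lemma nakayama_step:
  assumes fin: "finite G" and Gc: "G \<subseteq> carrier R" and x: "x \<in> carrier M"
    and hyp: "\<forall>a\<in>Idl G. \<exists>b\<in>ideal_prod R m (Idl G). a \<odot>\<^bsub>M\<^esub> x = b \<odot>\<^bsub>M\<^esub> x"
  shows "\<forall>a\<in>Idl G. a \<odot>\<^bsub>M\<^esub> x = \<zero>\<^bsub>M\<^esub>"
  using fin Gc hyp
proof (induct G rule: finite_induct)
  case empty
  then show ?case using x by (simp add: Idl_empty)
next
  case (insert h G')
  have hc: "h \<in> carrier R" and G'c: "G' \<subseteq> carrier R" using insert.prems(1) by auto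
  have Gc': "insert h G' \<subseteq> carrier R" using insert.prems(1) .
  define J where "J = Idl (insert h G')"
  define J' where "J' = Idl G'"
  define P where "P = ideal_prod R m J"
  define P' where "P' = ideal_prod R m J'"
  have IJ: "ideal J R" unfolding J_def by (rule genideal_ideal[OF Gc'])
  have IJ': "ideal J' R" unfolding J'_def by (rule genideal_ideal[OF G'c])
  have IP: "ideal P R" unfolding P_def by (rule ideal_prod_is_ideal[OF m_ideal IJ])
  have IP': "ideal P' R" unfolding P'_def by (rule ideal_prod_is_ideal[OF m_ideal IJ'])
  have J'J: "J' \<subseteq> J" unfolding J_def J'_def by (rule subset_Idl_subset[OF Gc']) auto
  have P'J': "P' \<subseteq> J'" unfolding P'_def using ideal_prod_inter[OF m_ideal IJ'] by auto
  have Pc: "P \<subseteq> carrier R" using ideal.Icarr[OF IP] by auto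
  have P'c: "P' \<subseteq> carrier R" using ideal.Icarr[OF IP'] by auto
  have hJ: "h \<in> J" unfolding J_def using genideal_self[OF Gc'] by auto
  have decJ: "\<exists>r a'. r \<in> carrier R \<and> a' \<in> J' \<and> a = r \<otimes> h \<oplus> a'" if "a \<in> J" for a
    using Idl_insert_decomp[OF hc G'c] that unfolding J_def J'_def by auto
  have decP: "\<exists>c b'. c \<in> m \<and> b' \<in> P' \<and> b = c \<otimes> h \<oplus> b'" if "b \<in> P" for b
    using that unfolding P_def
  proof (induct b rule: ideal_prod.induct)
    case (prod i j)
    obtain r a' where ra: "r \<in> carrier R" "a' \<in> J'" "j = r \<otimes> h \<oplus> a'" using decJ[OF prod(2)] by auto
    have ic: "i \<in> carrier R" using prod(1) m_carr by auto
    have a'c: "a' \<in> carrier R" using ra(2) ideal.Icarr[OF IJ'] by auto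
    have "i \<otimes> j = (i \<otimes> r) \<otimes> h \<oplus> i \<otimes> a'"
      using ra ic a'c hc by (simp add: r_distr m_assoc)
    moreover have "i \<otimes> r \<in> m" using ideal.I_r_closed[OF m_ideal prod(1) ra(1)] .
    moreover have "i \<otimes> a' \<in> P'" unfolding P'_def using prod(1) ra(2) by (rule ideal_prod.prod)
    ultimately show ?case by blast
  next
    case (sum s1 s2)
    obtain c1 b1 where 1: "c1 \<in> m" "b1 \<in> P'" "s1 = c1 \<otimes> h \<oplus> b1" using sum(2) by auto
    obtain c2 b2 where 2: "c2 \<in> m" "b2 \<in> P'" "s2 = c2 \<otimes> h \<oplus> b2" using sum(4) by auto
    have cc: "c1 \<in> carrier R" "c2 \<in> carrier R" using 1 2 m_carr by auto
    have bc: "b1 \<in> carrier R" "b2 \<in> carrier R" using 1 2 P'c by auto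
    have "s1 \<oplus> s2 = (c1 \<oplus> c2) \<otimes> h \<oplus> (b1 \<oplus> b2)"
    proof -
      have "c1 \<otimes> h \<in> carrier R" "c2 \<otimes> h \<in> carrier R" using cc hc by auto
      then show ?thesis using 1 2 cc bc hc by (simp add: l_distr four_sum)
    qed
    moreover have "c1 \<oplus> c2 \<in> m"
      using 1(1) 2(1) by (rule additive_subgroup.a_closed[OF ideal.axioms(1)[OF m_ideal]])
    moreover have "b1 \<oplus> b2 \<in> P'"
      using 1(2) 2(2) by (rule additive_subgroup.a_closed[OF ideal.axioms(1)[OF IP']])
    ultimately show ?case by blast
  qed
  have hypG: "\<forall>a\<in>J. \<exists>b\<in>P. a \<odot>\<^bsub>M\<^esub> x = b \<odot>\<^bsub>M\<^esub> x"
    using insert.prems(2) unfolding J_def P_def .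
  obtain b where b: "b \<in> P" "h \<odot>\<^bsub>M\<^esub> x = b \<odot>\<^bsub>M\<^esub> x" using hypG hJ by auto
  obtain c b' where cb: "c \<in> m" "b' \<in> P'" "b = c \<otimes> h \<oplus> b'" using decP[OF b(1)] by auto
  have cc: "c \<in> carrier R" using cb(1) m_carr by auto
  have b'c: "b' \<in> carrier R" using cb(2) P'c by auto
  have hx: "h \<odot>\<^bsub>M\<^esub> x \<in> carrier M" using hc x by simp
  have eq1: "h \<odot>\<^bsub>M\<^esub> x = c \<odot>\<^bsub>M\<^esub> (h \<odot>\<^bsub>M\<^esub> x) \<oplus>\<^bsub>M\<^esub> b' \<odot>\<^bsub>M\<^esub> x"
    using b(2) cb(3) cc b'c hc x by (simp add: smult_l_distr smult_assoc1)
  define u where "u = \<one> \<ominus> c"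
  have uU: "u \<in> Units R" unfolding u_def by (rule unit_1_minus[OF cb(1)])
  have uc: "u \<in> carrier R" unfolding u_def using cc by simp
  define v where "v = inv u"
  have vc: "v \<in> carrier R" unfolding v_def using uU by simp
  have vu: "v \<otimes> u = \<one>" unfolding v_def using uU by simp
  have "u \<odot>\<^bsub>M\<^esub> (h \<odot>\<^bsub>M\<^esub> x) = h \<odot>\<^bsub>M\<^esub> x \<ominus>\<^bsub>M\<^esub> c \<odot>\<^bsub>M\<^esub> (h \<odot>\<^bsub>M\<^esub> x)"
    unfolding u_def by (rule smult_1_minus[OF cc hx])
  also have "\<dots> = b' \<odot>\<^bsub>M\<^esub> x"
  proof -
    have z: "c \<odot>\<^bsub>M\<^esub> (h \<odot>\<^bsub>M\<^esub> x) \<in> carrier M" "b' \<odot>\<^bsub>M\<^esub> x \<in> carrier M" using cc hx b'c x by auto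
    show ?thesis
      by (subst eq1) (use z in \<open>simp add: M.minus_eq M.a_ac M.r_neg M.l_neg\<close>)
  qed
  finally have ux: "u \<odot>\<^bsub>M\<^esub> (h \<odot>\<^bsub>M\<^esub> x) = b' \<odot>\<^bsub>M\<^esub> x" .
  define w where "w = v \<otimes> b'"
  have wP': "w \<in> P'" unfolding w_def by (rule ideal.I_l_closed[OF IP' cb(2) vc])
  have wc: "w \<in> carrier R" using wP' P'c by auto
  have hxw: "h \<odot>\<^bsub>M\<^esub> x = w \<odot>\<^bsub>M\<^esub> x"
  proof -
    have "h \<odot>\<^bsub>M\<^esub> x = (v \<otimes> u) \<odot>\<^bsub>M\<^esub> (h \<odot>\<^bsub>M\<^esub> x)" using vu hx by simp
    also have "\<dots> = v \<odot>\<^bsub>M\<^esub> (u \<odot>\<^bsub>M\<^esub> (h \<odot>\<^bsub>M\<^esub> x))" using vc uc hx by (rule smult_assoc1)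
    also have "\<dots> = v \<odot>\<^bsub>M\<^esub> (b' \<odot>\<^bsub>M\<^esub> x)" using ux by simp
    also have "\<dots> = w \<odot>\<^bsub>M\<^esub> x" unfolding w_def using vc b'c x by (simp add: smult_assoc1)
    finally show ?thesis .
  qed
  have hyp': "\<forall>a\<in>J'. \<exists>b\<in>P'. a \<odot>\<^bsub>M\<^esub> x = b \<odot>\<^bsub>M\<^esub> x"
  proof
    fix a assume a: "a \<in> J'"
    then obtain b1 where b1: "b1 \<in> P" "a \<odot>\<^bsub>M\<^esub> x = b1 \<odot>\<^bsub>M\<^esub> x" using hypG J'J by auto
    obtain c1 d1 where cd: "c1 \<in> m" "d1 \<in> P'" "b1 = c1 \<otimes> h \<oplus> d1" using decP[OF b1(1)] by auto
    have c1c: "c1 \<in> carrier R" using cd(1) m_carr by auto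
    have d1c: "d1 \<in> carrier R" using cd(2) P'c by auto
    have "a \<odot>\<^bsub>M\<^esub> x = c1 \<odot>\<^bsub>M\<^esub> (h \<odot>\<^bsub>M\<^esub> x) \<oplus>\<^bsub>M\<^esub> d1 \<odot>\<^bsub>M\<^esub> x"
      using b1(2) cd(3) c1c d1c hc x by (simp add: smult_l_distr smult_assoc1)
    also have "\<dots> = (c1 \<otimes> w \<oplus> d1) \<odot>\<^bsub>M\<^esub> x"
      unfolding hxw using c1c wc d1c x by (simp add: smult_l_distr smult_assoc1)
    finally have e: "a \<odot>\<^bsub>M\<^esub> x = (c1 \<otimes> w \<oplus> d1) \<odot>\<^bsub>M\<^esub> x" .
    have "c1 \<otimes> w \<in> P'" by (rule ideal.I_l_closed[OF IP' wP' c1c])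
    then have "c1 \<otimes> w \<oplus> d1 \<in> P'"
      using cd(2) by (rule additive_subgroup.a_closed[OF ideal.axioms(1)[OF IP']])
    then show "\<exists>b\<in>P'. a \<odot>\<^bsub>M\<^esub> x = b \<odot>\<^bsub>M\<^esub> x" using e by blast
  qed
  have IH: "\<forall>a\<in>J'. a \<odot>\<^bsub>M\<^esub> x = \<zero>\<^bsub>M\<^esub>"
    using insert.hyps(3)[OF G'c] hyp' unfolding J'_def P'_def by blast
  have hx0: "h \<odot>\<^bsub>M\<^esub> x = \<zero>\<^bsub>M\<^esub>" using hxw IH wP' P'J' by auto
  show ?case
  proof
    fix a assume "a \<in> Idl (insert h G')"
    then obtain r a' where ra: "r \<in> carrier R" "a' \<in> J'" "a = r \<otimes> h \<oplus> a'" using decJ unfolding J_def by blast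
    have a'c: "a' \<in> carrier R" using ra(2) ideal.Icarr[OF IJ'] by auto
    have "a \<odot>\<^bsub>M\<^esub> x = r \<odot>\<^bsub>M\<^esub> (h \<odot>\<^bsub>M\<^esub> x) \<oplus>\<^bsub>M\<^esub> a' \<odot>\<^bsub>M\<^esub> x"
      using ra a'c hc x by (simp add: smult_l_distr smult_assoc1)
    then show "a \<odot>\<^bsub>M\<^esub> x = \<zero>\<^bsub>M\<^esub>" using hx0 IH ra(1,2) by simp
  qed
qed


lemma torsion:
  assumes noeth: "noetherian_ring R" and art: "artinian_module R M" and x: "x \<in> carrier M"
  shows "\<exists>k. \<forall>a\<in>ideal_power R m k. a \<odot>\<^bsub>M\<^esub> x = \<zero>\<^bsub>M\<^esub>"
proof -
  define C where "C k = {a \<odot>\<^bsub>M\<^esub> x | a. a \<in> ideal_power R m k}" for k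
  have Ik: "ideal (ideal_power R m k) R" for k by (rule ipow_ideal[OF m_ideal])
  have Ikc: "ideal_power R m k \<subseteq> carrier R" for k by (rule ipow_carrier[OF m_ideal])
  have sub: "submodule (C k) R M" for k
  proof (rule submoduleI)
    show "C k \<subseteq> carrier M" unfolding C_def using Ikc x by auto
    have "\<zero> \<in> ideal_power R m k" using additive_subgroup.zero_closed[OF ideal.axioms(1)[OF Ik]] .
    moreover have "\<zero> \<odot>\<^bsub>M\<^esub> x = \<zero>\<^bsub>M\<^esub>" using x by simp
    ultimately show "\<zero>\<^bsub>M\<^esub> \<in> C k" unfolding C_def by force
    show "\<ominus>\<^bsub>M\<^esub> y \<in> C k" if yC: "y \<in> C k" for y
    proof -
      obtain a where a: "a \<in> ideal_power R m k" "y = a \<odot>\<^bsub>M\<^esub> x" using yC unfolding C_def by auto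
      have "\<ominus> a \<in> ideal_power R m k" using additive_subgroup.a_inv_closed[OF ideal.axioms(1)[OF Ik] a(1)] .
      moreover have "\<ominus>\<^bsub>M\<^esub> y = (\<ominus> a) \<odot>\<^bsub>M\<^esub> x"
        using a(1) Ikc[of k] by (auto simp: a(2) x smult_l_minus)
      ultimately show ?thesis unfolding C_def by blast
    qed
    show "y \<oplus>\<^bsub>M\<^esub> z \<in> C k" if yC: "y \<in> C k" and zC: "z \<in> C k" for y z
    proof -
      obtain a where a: "a \<in> ideal_power R m k" "y = a \<odot>\<^bsub>M\<^esub> x" using yC unfolding C_def by auto
      obtain b where b: "b \<in> ideal_power R m k" "z = b \<odot>\<^bsub>M\<^esub> x" using zC unfolding C_def by auto
      have "a \<oplus> b \<in> ideal_power R m k" using additive_subgroup.a_closed[OF ideal.axioms(1)[OF Ik] a(1) b(1)] .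
      moreover have "y \<oplus>\<^bsub>M\<^esub> z = (a \<oplus> b) \<odot>\<^bsub>M\<^esub> x"
      proof -
        have "a \<in> carrier R" "b \<in> carrier R" using a(1) b(1) Ikc[of k] by auto
        then show ?thesis by (simp add: a(2) b(2) x smult_l_distr)
      qed
      ultimately show ?thesis unfolding C_def by blast
    qed
    show "r \<odot>\<^bsub>M\<^esub> y \<in> C k" if rc: "r \<in> carrier R" and yC: "y \<in> C k" for r y
    proof -
      obtain a where a: "a \<in> ideal_power R m k" "y = a \<odot>\<^bsub>M\<^esub> x" using yC unfolding C_def by auto
      have "r \<otimes> a \<in> ideal_power R m k" using ideal.I_l_closed[OF Ik a(1) rc] .
      moreover have "r \<odot>\<^bsub>M\<^esub> y = (r \<otimes> a) \<odot>\<^bsub>M\<^esub> x"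
        using a(1) Ikc[of k] by (auto simp: a(2) x rc smult_assoc1)
      ultimately show ?thesis unfolding C_def by blast
    qed
  qed
  have anti: "C (Suc k) \<subseteq> C k" for k
    unfolding C_def using ipow_Suc_sub[OF m_ideal, of k] by blast
  have "\<exists>k. C (Suc k) = C k"
  proof (rule ccontr)
    assume "\<not> (\<exists>k. C (Suc k) = C k)"
    then have "\<forall>i. C (Suc i) \<subset> C i" using anti by auto
    then show False using art sub unfolding artinian_module_def by blast
  qed
  then obtain k where k: "C (Suc k) = C k" by auto
  obtain G where G: "G \<subseteq> carrier R" "finite G" "ideal_power R m k = Idl G"
    using noetherian_ring.finetely_gen[OF noeth Ik] by blast
  have hyp: "\<forall>a\<in>Idl G. \<exists>b\<in>ideal_prod R m (Idl G). a \<odot>\<^bsub>M\<^esub> x = b \<odot>\<^bsub>M\<^esub> x"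
  proof
    fix a assume "a \<in> Idl G"
    then have "a \<odot>\<^bsub>M\<^esub> x \<in> C (Suc k)" using k G(3) unfolding C_def by blast
    then obtain b where b: "b \<in> ideal_power R m (Suc k)" "a \<odot>\<^bsub>M\<^esub> x = b \<odot>\<^bsub>M\<^esub> x" unfolding C_def by auto
    have "ideal_power R m (Suc k) = ideal_prod R m (Idl G)"
      using ideal_prod_commute[OF Ik[of k] m_ideal] G(3) by (simp add: ipow_Suc)
    then show "\<exists>b\<in>ideal_prod R m (Idl G). a \<odot>\<^bsub>M\<^esub> x = b \<odot>\<^bsub>M\<^esub> x" using b by auto
  qed
  have "\<forall>a\<in>Idl G. a \<odot>\<^bsub>M\<^esub> x = \<zero>\<^bsub>M\<^esub>" by (rule nakayama_step[OF G(2) G(1) x hyp])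
  then show ?thesis using G(3) by auto
qed

end


context umod begin

definition "adm Lo Hi F \<longleftrightarrow> submodule F R M \<and> Lo \<subseteq> F \<and> F \<subseteq> Hi"

lemma subquot_length_alt:
  "subquot_length R M Lo Hi = Sup {enat k | k. \<exists>f :: nat \<Rightarrow> 'b set.
      (\<forall>i\<le>k. adm Lo Hi (f i)) \<and> (\<forall>i<k. f i \<subset> f (Suc i))}"
  unfolding subquot_length_def adm_def by simp

lemma len_ge:
  assumes "\<forall>i\<le>k. adm Lo Hi (g i)" "\<forall>i<k. g i \<subset> g (Suc i)"
  shows "enat k \<le> subquot_length R M Lo Hi"
  unfolding subquot_length_alt using assms by (intro Sup_upper) blast

lemma len_le:
  assumes "\<And>k g. \<forall>i\<le>k. adm Lo Hi (g i) \<Longrightarrow> \<forall>i<k. g i \<subset> g (Suc i) \<Longrightarrow> enat k \<le> x"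
  shows "subquot_length R M Lo Hi \<le> x"
  unfolding subquot_length_alt using assms by (intro Sup_least) blast

lemma mono_chain_strict:
  assumes "\<forall>i\<le>k. adm Lo Hi (P i)" "\<forall>i<k. P i \<subseteq> P (Suc i)"
  shows "\<exists>g. (\<forall>i\<le>card {i. i < k \<and> P i \<subset> P (Suc i)}. adm Lo Hi (g i)) \<and>
             (\<forall>i<card {i. i < k \<and> P i \<subset> P (Suc i)}. g i \<subset> g (Suc i)) \<and>
             g (card {i. i < k \<and> P i \<subset> P (Suc i)}) = P k"
  using assms
proof (induct k)
  case 0
  then show ?case by (intro exI[of _ "\<lambda>_. P 0"]) auto
next
  case (Suc k)
  define c where "c = card {i. i < k \<and> P i \<subset> P (Suc i)}"
  obtain g where g: "\<forall>i\<le>c. adm Lo Hi (g i)" "\<forall>i<c. g i \<subset> g (Suc i)" "g c = P k"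
    using Suc unfolding c_def by auto
  show ?case
  proof (cases "P k \<subset> P (Suc k)")
    case True
    have "{i. i < Suc k \<and> P i \<subset> P (Suc i)} = insert k {i. i < k \<and> P i \<subset> P (Suc i)}"
      using True by auto
    then have cs: "card {i. i < Suc k \<and> P i \<subset> P (Suc i)} = Suc c" unfolding c_def by simp
    show ?thesis unfolding cs
      by (intro exI[of _ "g(Suc c := P (Suc k))"]) (use g True Suc.prems in \<open>auto simp: less_Suc_eq_le le_Suc_eq\<close>)
  next
    case False
    then have eq: "P (Suc k) = P k" using Suc.prems by auto
    have "{i. i < Suc k \<and> P i \<subset> P (Suc i)} = {i. i < k \<and> P i \<subset> P (Suc i)}"
      using False by (auto simp: less_Suc_eq)
    then have cs: "card {i. i < Suc k \<and> P i \<subset> P (Suc i)} = c" unfolding c_def by simp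
    show ?thesis unfolding cs eq using g by blast
  qed
qed

lemma len_count:
  assumes "\<forall>i\<le>k. adm Lo Hi (P i)" "\<forall>i<k. P i \<subseteq> P (Suc i)"
  shows "enat (card {i. i < k \<and> P i \<subset> P (Suc i)}) \<le> subquot_length R M Lo Hi"
proof -
  obtain g where "\<forall>i\<le>card {i. i < k \<and> P i \<subset> P (Suc i)}. adm Lo Hi (g i)"
    "\<forall>i<card {i. i < k \<and> P i \<subset> P (Suc i)}. g i \<subset> g (Suc i)"
    using mono_chain_strict[OF assms] by blast
  then show ?thesis by (rule len_ge)
qed


definition "msum F K = {y \<oplus>\<^bsub>M\<^esub> z | y z. y \<in> F \<and> z \<in> K}"

lemma msum_sub:
  assumes F: "submodule F R M" and K: "submodule K R M"
  shows "submodule (msum F K) R M"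
proof (rule submoduleI)
  have Fc: "F \<subseteq> carrier M" and Kc: "K \<subseteq> carrier M" using submod_facts(1) F K by auto
  show "msum F K \<subseteq> carrier M" unfolding msum_def using Fc Kc by auto
  have "\<zero>\<^bsub>M\<^esub> \<oplus>\<^bsub>M\<^esub> \<zero>\<^bsub>M\<^esub> \<in> msum F K" unfolding msum_def using submod_facts(2)[OF F] submod_facts(2)[OF K] by blast
  then show "\<zero>\<^bsub>M\<^esub> \<in> msum F K" by simp
  show "\<ominus>\<^bsub>M\<^esub> a \<in> msum F K" if aS: "a \<in> msum F K" for a
  proof -
    obtain y z where yz: "y \<in> F" "z \<in> K" "a = y \<oplus>\<^bsub>M\<^esub> z" using aS unfolding msum_def by auto
    have yc: "y \<in> carrier M" "z \<in> carrier M" using yz Fc Kc by auto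
    have "\<ominus>\<^bsub>M\<^esub> a = \<ominus>\<^bsub>M\<^esub> y \<oplus>\<^bsub>M\<^esub> \<ominus>\<^bsub>M\<^esub> z"
      using yc by (simp add: yz(3) M.minus_add)
    moreover have "\<ominus>\<^bsub>M\<^esub> y \<in> F" "\<ominus>\<^bsub>M\<^esub> z \<in> K" using yz submod_facts(3) F K by auto
    ultimately show ?thesis unfolding msum_def by blast
  qed
  show "a \<oplus>\<^bsub>M\<^esub> b \<in> msum F K" if aS: "a \<in> msum F K" and bS: "b \<in> msum F K" for a b
  proof -
    obtain y z where yz: "y \<in> F" "z \<in> K" "a = y \<oplus>\<^bsub>M\<^esub> z" using aS unfolding msum_def by auto
    obtain y' z' where yz': "y' \<in> F" "z' \<in> K" "b = y' \<oplus>\<^bsub>M\<^esub> z'" using bS unfolding msum_def by auto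
    have c: "y \<in> carrier M" "z \<in> carrier M" "y' \<in> carrier M" "z' \<in> carrier M" using yz yz' Fc Kc by auto
    have "a \<oplus>\<^bsub>M\<^esub> b = (y \<oplus>\<^bsub>M\<^esub> y') \<oplus>\<^bsub>M\<^esub> (z \<oplus>\<^bsub>M\<^esub> z')"
      using c by (simp add: yz(3) yz'(3) M.a_ac)
    moreover have "y \<oplus>\<^bsub>M\<^esub> y' \<in> F" "z \<oplus>\<^bsub>M\<^esub> z' \<in> K"
      using yz yz' submod_facts(5) F K by auto
    ultimately show ?thesis unfolding msum_def by blast
  qed
  show "r \<odot>\<^bsub>M\<^esub> a \<in> msum F K" if rc: "r \<in> carrier R" and aS: "a \<in> msum F K" for r a
  proof -
    obtain y z where yz: "y \<in> F" "z \<in> K" "a = y \<oplus>\<^bsub>M\<^esub> z" using aS unfolding msum_def by auto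
    have "r \<odot>\<^bsub>M\<^esub> a = r \<odot>\<^bsub>M\<^esub> y \<oplus>\<^bsub>M\<^esub> r \<odot>\<^bsub>M\<^esub> z"
    proof -
      have "y \<in> carrier M" "z \<in> carrier M" using yz Fc Kc by auto
      then show ?thesis using rc by (simp add: yz(3) smult_r_distr)
    qed
    moreover have "r \<odot>\<^bsub>M\<^esub> y \<in> F" "r \<odot>\<^bsub>M\<^esub> z \<in> K" using yz rc submod_facts(4) F K by auto
    ultimately show ?thesis unfolding msum_def by blast
  qed
qed

lemma msum_left: "submodule K R M \<Longrightarrow> F \<subseteq> carrier M \<Longrightarrow> F \<subseteq> msum F K"
proof
  fix x assume K: "submodule K R M" and Fc: "F \<subseteq> carrier M" and x: "x \<in> F"
  have "x = x \<oplus>\<^bsub>M\<^esub> \<zero>\<^bsub>M\<^esub>" using x Fc by auto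
  then show "x \<in> msum F K" unfolding msum_def using x submod_facts(2)[OF K] by blast
qed

lemma msum_right: "submodule F R M \<Longrightarrow> K \<subseteq> carrier M \<Longrightarrow> K \<subseteq> msum F K"
proof
  fix x assume F: "submodule F R M" and Kc: "K \<subseteq> carrier M" and x: "x \<in> K"
  have "x = \<zero>\<^bsub>M\<^esub> \<oplus>\<^bsub>M\<^esub> x" using x Kc by auto
  then show "x \<in> msum F K" unfolding msum_def using x submod_facts(2)[OF F] by blast
qed

lemma msum_mono: "F \<subseteq> F' \<Longrightarrow> msum F K \<subseteq> msum F' K"
  unfolding msum_def by blast

lemma msum_le: "submodule H R M \<Longrightarrow> F \<subseteq> H \<Longrightarrow> K \<subseteq> H \<Longrightarrow> msum F K \<subseteq> H"
  unfolding msum_def using submod_facts(5) by blast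

lemma modular:
  assumes F: "submodule F R M" and F': "submodule F' R M" and K: "submodule K R M" and FF': "F \<subseteq> F'"
    and i: "F \<inter> K = F' \<inter> K" and s: "msum F K = msum F' K"
  shows "F = F'"
proof
  show "F \<subseteq> F'" by fact
  show "F' \<subseteq> F"
  proof
    fix x assume x: "x \<in> F'"
    have F'c: "F' \<subseteq> carrier M" and Kc: "K \<subseteq> carrier M" using submod_facts(1) F' K by auto
    have "x \<in> msum F' K" using msum_left[OF K F'c] x by auto
    then have "x \<in> msum F K" using s by simp
    then obtain y z where yz: "y \<in> F" "z \<in> K" "x = y \<oplus>\<^bsub>M\<^esub> z" unfolding msum_def by auto
    have yc: "y \<in> carrier M" and zc: "z \<in> carrier M" using yz FF' F'c Kc by auto
    have "z = \<ominus>\<^bsub>M\<^esub> y \<oplus>\<^bsub>M\<^esub> x"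
      using yc zc by (simp add: yz(3) M.a_assoc[symmetric] M.l_neg)
    moreover have "\<ominus>\<^bsub>M\<^esub> y \<in> F'" using yz(1) FF' submod_facts(3)[OF F'] by auto
    ultimately have "z \<in> F'" using x submod_facts(5)[OF F'] by auto
    then have "z \<in> F" using i yz(2) by auto
    then show "x \<in> F" using yz submod_facts(5)[OF F] by auto
  qed
qed


lemma len_add:
  assumes Lo: "submodule Lo R M" and K: "submodule K R M" and Hi: "submodule Hi R M"
    and LK: "Lo \<subseteq> K" and KH: "K \<subseteq> Hi"
  shows "subquot_length R M Lo Hi \<le> subquot_length R M Lo K + subquot_length R M K Hi"
proof (rule len_le)
  fix k F assume F: "\<forall>i\<le>k. adm Lo Hi (F i)" and st: "\<forall>i<k. F i \<subset> F (Suc i)"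
  define P where "P i = F i \<inter> K" for i
  define Q where "Q i = msum (F i) K" for i
  have Fs: "submodule (F i) R M" if "i \<le> k" for i using F that unfolding adm_def by auto
  have Kc: "K \<subseteq> carrier M" using submod_facts(1)[OF K] .
  have admP: "\<forall>i\<le>k. adm Lo K (P i)"
  proof (intro allI impI)
    fix i assume i: "i \<le> k"
    have "submodule (\<Inter>{F i, K}) R M" by (rule submod_Inter) (use Fs[OF i] K in auto)
    then show "adm Lo K (P i)" using F i LK unfolding adm_def P_def by auto
  qed
  have admQ: "\<forall>i\<le>k. adm K Hi (Q i)"
  proof (intro allI impI)
    fix i assume i: "i \<le> k"
    have "submodule (Q i) R M" unfolding Q_def by (rule msum_sub[OF Fs[OF i] K])
    moreover have "K \<subseteq> Q i" unfolding Q_def by (rule msum_right[OF Fs[OF i] Kc])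
    moreover have "Q i \<subseteq> Hi" unfolding Q_def using F i KH unfolding adm_def by (intro msum_le[OF Hi]) auto
    ultimately show "adm K Hi (Q i)" unfolding adm_def by auto
  qed
  have monP: "\<forall>i<k. P i \<subseteq> P (Suc i)" using st unfolding P_def by auto
  have monQ: "\<forall>i<k. Q i \<subseteq> Q (Suc i)"
  proof (intro allI impI)
    fix i assume "i < k"
    then have "F i \<subseteq> F (Suc i)" using st by auto
    then show "Q i \<subseteq> Q (Suc i)" unfolding Q_def by (rule msum_mono)
  qed
  have cov: "{i. i < k} \<subseteq> {i. i < k \<and> P i \<subset> P (Suc i)} \<union> {i. i < k \<and> Q i \<subset> Q (Suc i)}"
  proof
    fix i assume "i \<in> {i. i < k}"
    then have i: "i < k" by simp
    show "i \<in> {i. i < k \<and> P i \<subset> P (Suc i)} \<union> {i. i < k \<and> Q i \<subset> Q (Suc i)}"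
    proof (rule ccontr)
      assume "\<not> ?thesis"
      then have "P i = P (Suc i)" "Q i = Q (Suc i)" using monP monQ i by auto
      then have "F i = F (Suc i)"
        using modular[OF Fs[of i] Fs[of "Suc i"] K] st i unfolding P_def Q_def by auto
      then show False using st i by auto
    qed
  qed
  have "k \<le> card {i. i < k \<and> P i \<subset> P (Suc i)} + card {i. i < k \<and> Q i \<subset> Q (Suc i)}"
  proof -
    have "k = card {i. i < k}" by simp
    also have "\<dots> \<le> card ({i. i < k \<and> P i \<subset> P (Suc i)} \<union> {i. i < k \<and> Q i \<subset> Q (Suc i)})"
      by (rule card_mono[OF _ cov]) auto
    also have "\<dots> \<le> card {i. i < k \<and> P i \<subset> P (Suc i)} + card {i. i < k \<and> Q i \<subset> Q (Suc i)}"
      by (rule card_Un_le)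
    finally show ?thesis .
  qed
  then have "enat k \<le> enat (card {i. i < k \<and> P i \<subset> P (Suc i)}) + enat (card {i. i < k \<and> Q i \<subset> Q (Suc i)})"
    by simp
  also have "\<dots> \<le> subquot_length R M Lo K + subquot_length R M K Hi"
    by (intro add_mono len_count admP admQ monP monQ)
  finally show "enat k \<le> subquot_length R M Lo K + subquot_length R M K Hi" .
qed

end


locale mainctx = lring R m + twomod R A L
  for R :: "('a, 'c) ring_scheme" (structure) and m and A :: "('a, 'd) module" and L :: "('a, 'b) module" +
  fixes n t s :: nat
  assumes noeth: "noetherian_ring R" and art: "artinian_module R A"
    and gam: "mod_ideal_prod R L (ideal_power R m n) (Gamma R m L) = {\<zero>\<^bsub>L\<^esub>}"
    and tt: "mod_ideal_prod R A (ideal_power R m t) (carrier A)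
         = mod_ideal_prod R A (ideal_power R m (Suc t)) (carrier A)"
    and st: "min n t \<le> s"
begin

lemma lmodA: "lmod R m A" by intro_locales

lemma Ik: "ideal (ideal_power R m k) R" by (rule ipow_ideal[OF m_ideal])
lemma Ikc: "ideal_power R m k \<subseteq> carrier R" by (rule ipow_carrier[OF m_ideal])

lemma fx_Gamma:
  assumes f: "f \<in> carrier H" and x: "x \<in> carrier A"
  shows "f x \<in> Gamma R m L"
proof -
  obtain k where k: "\<forall>a\<in>ideal_power R m k. a \<odot>\<^bsub>A\<^esub> x = \<zero>\<^bsub>A\<^esub>"
    using lmod.torsion[OF lmodA noeth art x] by blast
  have "\<forall>a\<in>ideal_power R m k. a \<odot>\<^bsub>L\<^esub> f x = \<zero>\<^bsub>L\<^esub>"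
  proof
    fix a assume a: "a \<in> ideal_power R m k"
    then have ac: "a \<in> carrier R" using Ikc by auto
    have "a \<odot>\<^bsub>L\<^esub> f x = f (a \<odot>\<^bsub>A\<^esub> x)" using hom_smult[OF f ac x] by simp
    also have "\<dots> = \<zero>\<^bsub>L\<^esub>" using k a hom_zero[OF f] by simp
    finally show "a \<odot>\<^bsub>L\<^esub> f x = \<zero>\<^bsub>L\<^esub>" .
  qed
  then show ?thesis unfolding Gamma_def using hom_closed[OF f x] by auto
qed

lemma gam_kill:
  assumes y: "y \<in> Gamma R m L" and b: "b \<in> ideal_power R m n"
  shows "b \<odot>\<^bsub>L\<^esub> y = \<zero>\<^bsub>L\<^esub>"
  using L.mip_prod[OF b y] gam by simp

definition "kerf f = {z \<in> carrier A. f z = \<zero>\<^bsub>L\<^esub>}"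

lemma kerf_sub:
  assumes f: "f \<in> carrier H"
  shows "submodule (kerf f) R A"
proof (rule A.submoduleI)
  show "kerf f \<subseteq> carrier A" unfolding kerf_def by auto
  show "\<zero>\<^bsub>A\<^esub> \<in> kerf f" unfolding kerf_def using hom_zero[OF f] by auto
  show "\<ominus>\<^bsub>A\<^esub> a \<in> kerf f" if "a \<in> kerf f" for a
    using that unfolding kerf_def by (auto simp: hom_neg[OF f])
  show "a \<oplus>\<^bsub>A\<^esub> b \<in> kerf f" if "a \<in> kerf f" "b \<in> kerf f" for a b
    using that unfolding kerf_def by (auto simp: hom_add[OF f])
  show "a \<odot>\<^bsub>A\<^esub> x \<in> kerf f" if "a \<in> carrier R" "x \<in> kerf f" for a x
    using that unfolding kerf_def by (auto simp: hom_smult[OF f])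
qed

abbreviation "T \<equiv> mod_ideal_prod R A (ideal_power R m t) (carrier A)"

lemma Tc: "T \<subseteq> carrier A" by (rule A.mip_carrier[OF Ikc]) simp

lemma T_sub_mT: "T \<subseteq> mod_ideal_prod R A m T"
proof -
  have "T = mod_ideal_prod R A (ideal_prod R m (ideal_power R m t)) (carrier A)"
    using tt ideal_prod_commute[OF Ik m_ideal] by (simp add: ipow_Suc)
  also have "\<dots> \<subseteq> mod_ideal_prod R A m T"
    by (rule A.mip_assoc1[OF m_ideal Ik]) simp
  finally show ?thesis .
qed

lemma T_iter: "T \<subseteq> mod_ideal_prod R A (ideal_power R m j) T"
proof (induct j)
  case 0
  then show ?case using A.mip_one[OF Tc] by simp
next
  case (Suc j)
  have mTc: "mod_ideal_prod R A m T \<subseteq> carrier A" by (rule A.mip_carrier[OF m_carr Tc])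
  note Suc
  also have "mod_ideal_prod R A (ideal_power R m j) T \<subseteq> mod_ideal_prod R A (ideal_power R m j) (mod_ideal_prod R A m T)"
    by (rule A.mip_mono[OF Ikc mTc order.refl T_sub_mT])
  also have "\<dots> \<subseteq> mod_ideal_prod R A (ideal_prod R (ideal_power R m j) m) T"
    by (rule A.mip_assoc2[OF Ik m_ideal Tc])
  finally show ?case by (simp add: ipow_Suc)
qed

lemma key:
  assumes f: "f \<in> carrier H" and x: "x \<in> carrier A" and a: "a \<in> ideal_power R m s"
  shows "a \<odot>\<^bsub>L\<^esub> f x = \<zero>\<^bsub>L\<^esub>"
proof (cases "n \<le> s")
  case True
  then have "a \<in> ideal_power R m n" using ipow_antimono[OF m_ideal True] a by auto
  then show ?thesis using gam_kill fx_Gamma[OF f x] by auto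
next
  case False
  then have ts: "t \<le> s" using st by auto
  then have at: "a \<in> ideal_power R m t" using ipow_antimono[OF m_ideal ts] a by auto
  have ac: "a \<in> carrier R" using at Ikc by auto
  have "mod_ideal_prod R A (ideal_power R m n) T \<subseteq> kerf f"
  proof (rule A.mip_min[OF kerf_sub[OF f]])
    fix b z assume b: "b \<in> ideal_power R m n" and z: "z \<in> T"
    have zc: "z \<in> carrier A" using z Tc by auto
    have bc: "b \<in> carrier R" using b Ikc by auto
    have "f (b \<odot>\<^bsub>A\<^esub> z) = b \<odot>\<^bsub>L\<^esub> f z" by (rule hom_smult[OF f bc zc])
    also have "\<dots> = \<zero>\<^bsub>L\<^esub>" by (rule gam_kill[OF fx_Gamma[OF f zc] b])
    finally show "b \<odot>\<^bsub>A\<^esub> z \<in> kerf f" unfolding kerf_def using bc zc by auto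
  qed
  then have Tk: "T \<subseteq> kerf f" using T_iter[of n] by auto
  have "a \<odot>\<^bsub>A\<^esub> x \<in> T" by (rule A.mip_prod[OF at x])
  then have "f (a \<odot>\<^bsub>A\<^esub> x) = \<zero>\<^bsub>L\<^esub>" using Tk unfolding kerf_def by auto
  then show ?thesis using hom_smult[OF f ac x] by simp
qed

end


context umod begin

abbreviation "gen S \<equiv> mod_ideal_prod R M (carrier R) S"

lemma gen_sub: "S \<subseteq> carrier M \<Longrightarrow> submodule (gen S) R M"
  by (rule mip_submodule) auto

lemma gen_incl: "S \<subseteq> carrier M \<Longrightarrow> S \<subseteq> gen S"
  by (rule mip_one)

lemma gen_min: assumes "submodule H R M" "S \<subseteq> H" shows "gen S \<subseteq> H"
  by (rule mip_min[OF assms(1)]) (use submod_facts(4)[OF assms(1)] assms(2) in blast)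

lemma gen_mono: "S' \<subseteq> carrier M \<Longrightarrow> S \<subseteq> S' \<Longrightarrow> gen S \<subseteq> gen S'"
  by (rule mip_mono) auto

lemma len_refl: "subquot_length R M Z Z = 0"
proof -
  have "subquot_length R M Z Z \<le> 0"
  proof (rule len_le)
    fix k g assume a: "\<forall>i\<le>k. adm Z Z (g i)" "\<forall>i<k. g i \<subset> g (Suc i)"
    show "enat k \<le> 0"
    proof (rule ccontr)
      assume "\<not> enat k \<le> 0"
      then have "0 < k" by (simp add: zero_enat_def)
      have "g 0 \<subset> g (Suc 0)" using a(2) \<open>0 < k\<close> by auto
      moreover have "adm Z Z (g 0)" "adm Z Z (g (Suc 0))" using a(1) \<open>0 < k\<close> by (auto simp: Suc_le_eq)
      then have "g 0 = Z" "g (Suc 0) = Z" unfolding adm_def by auto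
      ultimately show False by auto
    qed
  qed
  then show ?thesis by simp
qed

lemma gens_exist:
  assumes Lo: "submodule Lo R M" and b: "subquot_length R M Lo (carrier M) = enat b"
  shows "\<exists>as. length as \<le> b \<and> set as \<subseteq> carrier M \<and> gen (Lo \<union> set as) = carrier M"
proof -
  have Loc: "Lo \<subseteq> carrier M" using submod_facts(1)[OF Lo] .
  define N where "N as = gen (Lo \<union> set as)" for as
  define good where "good k \<longleftrightarrow> (\<exists>as. length as = k \<and> set as \<subseteq> carrier M \<and>
      (\<forall>i<k. N (take i as) \<subset> N (take (Suc i) as)))" for k
  have Nsub: "set as \<subseteq> carrier M \<Longrightarrow> submodule (N as) R M" for as
    unfolding N_def using Loc by (intro gen_sub) auto
  have Nadm: "set as \<subseteq> carrier M \<Longrightarrow> adm Lo (carrier M) (N as)" for as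
  proof -
    assume as: "set as \<subseteq> carrier M"
    have "Lo \<subseteq> N as" unfolding N_def using gen_incl[of "Lo \<union> set as"] Loc as by auto
    then show ?thesis unfolding adm_def using Nsub[OF as] submod_facts(1)[OF Nsub[OF as]] by auto
  qed
  have bound: "good k \<Longrightarrow> k \<le> b" for k
  proof -
    assume "good k"
    then obtain as where as: "length as = k" "set as \<subseteq> carrier M"
      "\<forall>i<k. N (take i as) \<subset> N (take (Suc i) as)" unfolding good_def by auto
    have "\<forall>i\<le>k. adm Lo (carrier M) (N (take i as))"
    proof (intro allI impI)
      fix i assume "i \<le> k"
      have "set (take i as) \<subseteq> carrier M" using set_take_subset as(2) by (rule order.trans)
      then show "adm Lo (carrier M) (N (take i as))" by (rule Nadm)
    qed
    then have "enat k \<le> subquot_length R M Lo (carrier M)" using as(3) by (rule len_ge)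
    then show "k \<le> b" using b by simp
  qed
  have good0: "good 0" unfolding good_def by auto
  define k where "k = Max {k. good k}"
  have "{k. good k} \<subseteq> {..b}" using bound by auto
  then have fin: "finite {k. good k}" by (rule finite_subset) simp
  have ne: "{k. good k} \<noteq> {}" using good0 by auto
  have "k \<in> {k. good k}" unfolding k_def using fin ne by (rule Max_in)
  then have gk: "good k" by simp
  have maxk: "good j \<Longrightarrow> j \<le> k" for j unfolding k_def by (rule Max_ge[OF fin]) simp
  obtain as where as: "length as = k" "set as \<subseteq> carrier M"
      "\<forall>i<k. N (take i as) \<subset> N (take (Suc i) as)" using gk unfolding good_def by auto
  have "N as = carrier M"
  proof (rule ccontr)
    assume ne: "N as \<noteq> carrier M"
    have "N as \<subseteq> carrier M" using submod_facts(1)[OF Nsub[OF as(2)]] .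
    then obtain y where y: "y \<in> carrier M" "y \<notin> N as" using ne by auto
    define as' where "as' = as @ [y]"
    have as'c: "set as' \<subseteq> carrier M" unfolding as'_def using as(2) y(1) by auto
    have "good (Suc k)" unfolding good_def
    proof (intro exI conjI)
      show "length as' = Suc k" unfolding as'_def using as(1) by simp
      show "set as' \<subseteq> carrier M" by (rule as'c)
      show "\<forall>i<Suc k. N (take i as') \<subset> N (take (Suc i) as')"
      proof (intro allI impI)
        fix i assume i: "i < Suc k"
        show "N (take i as') \<subset> N (take (Suc i) as')"
        proof (cases "i < k")
          case True
          then show ?thesis using as(1,3) unfolding as'_def by simp
        next
          case False
          then have ik: "i = k" using i by simp
          have t1: "take i as' = as" unfolding as'_def ik using as(1) by simp
          have t2: "take (Suc i) as' = as'" unfolding as'_def ik using as(1) by simp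
          have "N as \<subseteq> N as'" unfolding N_def as'_def using Loc as'c[unfolded as'_def]
            by (intro gen_mono) auto
          moreover have "y \<in> N as'" unfolding N_def
            using gen_incl[of "Lo \<union> set as'"] Loc as'c unfolding as'_def by auto
          ultimately show ?thesis unfolding t1 t2 using y(2) by auto
        qed
      qed
    qed
    then have "Suc k \<le> k" by (rule maxk)
    then show False by simp
  qed
  then show ?thesis using as bound[OF gk] unfolding N_def by auto
qed

definition "annih I = annihilated M I"

lemma annih_sub:
  assumes I: "I \<subseteq> carrier R"
  shows "submodule (annihilated M I) R M"
proof (rule submoduleI)
  show "annihilated M I \<subseteq> carrier M" unfolding annihilated_def by auto
  show "\<zero>\<^bsub>M\<^esub> \<in> annihilated M I" unfolding annihilated_def using I by auto
  show "\<ominus>\<^bsub>M\<^esub> x \<in> annihilated M I" if "x \<in> annihilated M I" for x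
    using that I unfolding annihilated_def by (auto simp: smult_r_minus subsetD)
  show "x \<oplus>\<^bsub>M\<^esub> y \<in> annihilated M I" if "x \<in> annihilated M I" "y \<in> annihilated M I" for x y
    using that I unfolding annihilated_def by (auto simp: smult_r_distr subsetD)
  show "c \<odot>\<^bsub>M\<^esub> x \<in> annihilated M I" if "c \<in> carrier R" "x \<in> annihilated M I" for c x
  proof -
    have "a \<odot>\<^bsub>M\<^esub> (c \<odot>\<^bsub>M\<^esub> x) = \<zero>\<^bsub>M\<^esub>" if a: "a \<in> I" for a
    proof -
      have ac: "a \<in> carrier R" using a I by auto
      have xc: "x \<in> carrier M" using \<open>x \<in> annihilated M I\<close> unfolding annihilated_def by auto
      have "a \<odot>\<^bsub>M\<^esub> (c \<odot>\<^bsub>M\<^esub> x) = (a \<otimes>\<^bsub>R\<^esub> c) \<odot>\<^bsub>M\<^esub> x" using ac \<open>c \<in> carrier R\<close> xc by (simp add: smult_assoc1)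
      also have "\<dots> = (c \<otimes>\<^bsub>R\<^esub> a) \<odot>\<^bsub>M\<^esub> x" using ac \<open>c \<in> carrier R\<close> by (simp add: R.m_comm)
      also have "\<dots> = c \<odot>\<^bsub>M\<^esub> (a \<odot>\<^bsub>M\<^esub> x)" using ac \<open>c \<in> carrier R\<close> xc by (simp add: smult_assoc1)
      also have "\<dots> = \<zero>\<^bsub>M\<^esub>" using a \<open>x \<in> annihilated M I\<close> \<open>c \<in> carrier R\<close> unfolding annihilated_def by auto
      finally show ?thesis .
    qed
    then show ?thesis using that unfolding annihilated_def by auto
  qed
qed

end


context mainctx begin

abbreviation "mpA j \<equiv> mod_ideal_prod R A (ideal_power R m j) (carrier A)"
abbreviation "mA \<equiv> mod_ideal_prod R A m (carrier A)"

lemma mpA_sub: "submodule (mpA j) R A" by (rule A.mip_submodule[OF Ikc]) simp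
lemma mpA_c: "mpA j \<subseteq> carrier A" by (rule A.mip_carrier[OF Ikc]) simp
lemma mA_sub: "submodule mA R A" by (rule A.mip_submodule[OF m_carr]) simp
lemma mA_c: "mA \<subseteq> carrier A" by (rule A.mip_carrier[OF m_carr]) simp

lemma vanish:
  assumes f: "f \<in> carrier H" and asc: "set as \<subseteq> carrier A"
    and gen: "A.gen (mA \<union> set as) = carrier A" and z: "\<forall>a\<in>set as. f a = \<zero>\<^bsub>L\<^esub>"
  shows "f = \<zero>\<^bsub>H\<^esub>"
proof -
  define Y where "Y = kerf f"
  have Ys: "submodule Y R A" unfolding Y_def by (rule kerf_sub[OF f])
  have Yc: "Y \<subseteq> carrier A" using A.submod_facts(1)[OF Ys] .
  have ms: "mpA s \<subseteq> Y"
  proof (rule A.mip_min[OF Ys])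
    fix b x assume b: "b \<in> ideal_power R m s" and x: "x \<in> carrier A"
    have bc: "b \<in> carrier R" using b Ikc by auto
    have "f (b \<odot>\<^bsub>A\<^esub> x) = b \<odot>\<^bsub>L\<^esub> f x" by (rule hom_smult[OF f bc x])
    also have "\<dots> = \<zero>\<^bsub>L\<^esub>" by (rule key[OF f x b])
    finally show "b \<odot>\<^bsub>A\<^esub> x \<in> Y" unfolding Y_def kerf_def using bc x by auto
  qed
  have C1: "carrier A \<subseteq> A.msum Y mA"
  proof -
    have "A.gen (mA \<union> set as) \<subseteq> A.msum Y mA"
    proof (rule A.gen_min[OF A.msum_sub[OF Ys mA_sub]])
      have "mA \<subseteq> A.msum Y mA" by (rule A.msum_right[OF Ys mA_c])
      moreover have "set as \<subseteq> A.msum Y mA"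
      proof -
        have "set as \<subseteq> Y" unfolding Y_def kerf_def using asc z by auto
        also have "Y \<subseteq> A.msum Y mA" by (rule A.msum_left[OF mA_sub Yc])
        finally show ?thesis .
      qed
      ultimately show "mA \<union> set as \<subseteq> A.msum Y mA" by auto
    qed
    then show ?thesis using gen by simp
  qed
  have step: "mod_ideal_prod R A (ideal_power R m j) (A.msum Y Z) \<subseteq> A.msum Y (mod_ideal_prod R A (ideal_power R m j) Z)"
    if Zc: "Z \<subseteq> carrier A" for j Z
  proof (rule A.mip_min[OF A.msum_sub[OF Ys A.mip_submodule[OF Ikc Zc]]])
    fix c w assume c: "c \<in> ideal_power R m j" and w: "w \<in> A.msum Y Z"
    obtain y zz where yz: "y \<in> Y" "zz \<in> Z" "w = y \<oplus>\<^bsub>A\<^esub> zz" using w unfolding A.msum_def by auto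
    have cc: "c \<in> carrier R" using c Ikc by auto
    have yc: "y \<in> carrier A" "zz \<in> carrier A" using yz Yc Zc by auto
    have "c \<odot>\<^bsub>A\<^esub> w = c \<odot>\<^bsub>A\<^esub> y \<oplus>\<^bsub>A\<^esub> c \<odot>\<^bsub>A\<^esub> zz" using yc cc by (simp add: yz(3) A.smult_r_distr)
    moreover have "c \<odot>\<^bsub>A\<^esub> y \<in> Y" using A.submod_facts(4)[OF Ys cc yz(1)] .
    moreover have "c \<odot>\<^bsub>A\<^esub> zz \<in> mod_ideal_prod R A (ideal_power R m j) Z" by (rule A.mip_prod[OF c yz(2)])
    ultimately show "c \<odot>\<^bsub>A\<^esub> w \<in> A.msum Y (mod_ideal_prod R A (ideal_power R m j) Z)"
      unfolding A.msum_def by blast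
  qed
  have ind: "carrier A \<subseteq> A.msum Y (mpA j)" for j
  proof (induct j)
    case 0
    have "carrier A \<subseteq> mpA 0" using A.mip_one[of "carrier A"] by simp
    also have "\<dots> \<subseteq> A.msum Y (mpA 0)" by (rule A.msum_right[OF Ys mpA_c])
    finally show ?case .
  next
    case (Suc j)
    have YmA: "A.msum Y mA \<subseteq> carrier A" using A.submod_facts(1)[OF A.msum_sub[OF Ys mA_sub]] .
    have "mpA j \<subseteq> mod_ideal_prod R A (ideal_power R m j) (A.msum Y mA)"
      by (rule A.mip_mono[OF Ikc YmA order.refl C1])
    also have "\<dots> \<subseteq> A.msum Y (mod_ideal_prod R A (ideal_power R m j) mA)"
      by (rule step[OF mA_c])
    also have "\<dots> \<subseteq> A.msum Y (mpA (Suc j))"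
    proof -
      have "mod_ideal_prod R A (ideal_power R m j) mA \<subseteq> mod_ideal_prod R A (ideal_prod R (ideal_power R m j) m) (carrier A)"
        by (rule A.mip_assoc2[OF Ik m_ideal]) simp
      then show ?thesis unfolding A.msum_def by (auto simp: ipow_Suc)
    qed
    finally have a: "mpA j \<subseteq> A.msum Y (mpA (Suc j))" .
    have "A.msum Y (mpA j) \<subseteq> A.msum Y (mpA (Suc j))"
    proof (rule A.msum_le[OF A.msum_sub[OF Ys mpA_sub] _ a])
      show "Y \<subseteq> A.msum Y (mpA (Suc j))" by (rule A.msum_left[OF mpA_sub Yc])
    qed
    then show ?case using Suc by auto
  qed
  have "carrier A \<subseteq> Y"
  proof -
    have "carrier A \<subseteq> A.msum Y (mpA s)" by (rule ind)
    also have "\<dots> \<subseteq> Y" by (rule A.msum_le[OF Ys order.refl ms])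
    finally show ?thesis .
  qed
  then show ?thesis
    by (intro hom_eqI[OF f Hom_zero_closed]) (auto simp: Y_def kerf_def Hom_zero)
qed

end


sublocale mainctx \<subseteq> Hm: umod R "Hom_mod R A L"
  unfolding umod_def by (rule Hom_module)

context mainctx begin

abbreviation "NN \<equiv> annihilated L (ideal_power R m s)"

definition "Hf as i = {f \<in> carrier H. \<forall>l<i. l < length as \<longrightarrow> f (as ! l) = \<zero>\<^bsub>L\<^esub>}"

lemma hneg_ap: "x \<in> carrier A \<Longrightarrow> hneg f x = \<ominus>\<^bsub>L\<^esub> f x" by (simp add: hneg_def)

lemma Hf_sub:
  assumes asc: "set as \<subseteq> carrier A"
  shows "submodule (Hf as i) R H"
proof (rule Hm.submoduleI)
  have nth: "l < length as \<Longrightarrow> as ! l \<in> carrier A" for l using asc nth_mem by blast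
  show "Hf as i \<subseteq> carrier H" unfolding Hf_def by auto
  show "\<zero>\<^bsub>H\<^esub> \<in> Hf as i" unfolding Hf_def using Hom_zero_closed nth by (auto simp: Hom_zero)
  show "\<ominus>\<^bsub>H\<^esub> f \<in> Hf as i" if f: "f \<in> Hf as i" for f
  proof -
    have fc: "f \<in> carrier H" using f unfolding Hf_def by auto
    have "\<ominus>\<^bsub>H\<^esub> f = hneg f" by (rule Hom_neg[OF fc])
    then show ?thesis using f hneg_closed[OF fc] nth unfolding Hf_def by (auto simp: hneg_ap)
  qed
  show "f \<oplus>\<^bsub>H\<^esub> g \<in> Hf as i" if f: "f \<in> Hf as i" and g: "g \<in> Hf as i" for f g
  proof -
    have fc: "f \<in> carrier H" "g \<in> carrier H" using f g unfolding Hf_def by auto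
    show ?thesis using f g Hom_add_closed[OF fc] nth unfolding Hf_def by (auto simp: Hom_add)
  qed
  show "a \<odot>\<^bsub>H\<^esub> f \<in> Hf as i" if a: "a \<in> carrier R" and f: "f \<in> Hf as i" for a f
  proof -
    have fc: "f \<in> carrier H" using f unfolding Hf_def by auto
    show ?thesis using f a Hom_smult_closed[OF a fc] nth unfolding Hf_def by (auto simp: Hom_smult)
  qed
qed

lemma Hf_0: "Hf as 0 = carrier H" unfolding Hf_def by auto

lemma Hf_anti: "Hf as (Suc i) \<subseteq> Hf as i" unfolding Hf_def by auto

lemma Hf_last:
  assumes asc: "set as \<subseteq> carrier A" and gen: "A.gen (mA \<union> set as) = carrier A"
  shows "Hf as (length as) = {\<zero>\<^bsub>H\<^esub>}"
proof
  show "Hf as (length as) \<subseteq> {\<zero>\<^bsub>H\<^esub>}"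
  proof
    fix f assume f: "f \<in> Hf as (length as)"
    have "\<forall>a\<in>set as. f a = \<zero>\<^bsub>L\<^esub>" using f unfolding Hf_def by (auto simp: in_set_conv_nth)
    then have "f = \<zero>\<^bsub>H\<^esub>" using f unfolding Hf_def by (intro vanish[OF _ asc gen]) auto
    then show "f \<in> {\<zero>\<^bsub>H\<^esub>}" by simp
  qed
  show "{\<zero>\<^bsub>H\<^esub>} \<subseteq> Hf as (length as)" using Hm.submod_facts(2)[OF Hf_sub[OF asc]] by auto
qed

lemma NN_sub: "submodule NN R L" by (rule L.annih_sub[OF Ikc])


lemma image_adm:
  assumes G: "submodule G R H" and ac: "a \<in> carrier A"
  shows "L.adm {\<zero>\<^bsub>L\<^esub>} NN ((\<lambda>g. g a) ` G)"
proof -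
  have Gc: "G \<subseteq> carrier H" using Hm.submod_facts(1)[OF G] .
  have z: "\<zero>\<^bsub>H\<^esub> \<in> G" using Hm.submod_facts(2)[OF G] .
  have sub: "submodule ((\<lambda>g. g a) ` G) R L"
  proof (rule L.submoduleI)
    show "(\<lambda>g. g a) ` G \<subseteq> carrier L" using Gc hom_closed ac by auto
    show "\<zero>\<^bsub>L\<^esub> \<in> (\<lambda>g. g a) ` G"
    proof (rule image_eqI[where x="\<zero>\<^bsub>H\<^esub>"])
      show "\<zero>\<^bsub>L\<^esub> = \<zero>\<^bsub>H\<^esub> a" using ac by (simp add: Hom_zero)
    qed (rule z)
    show "\<ominus>\<^bsub>L\<^esub> y \<in> (\<lambda>g. g a) ` G" if y: "y \<in> (\<lambda>g. g a) ` G" for y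
    proof -
      obtain g where g: "g \<in> G" "y = g a" using y by auto
      have gc: "g \<in> carrier H" using g Gc by auto
      have "\<ominus>\<^bsub>H\<^esub> g \<in> G" using Hm.submod_facts(3)[OF G g(1)] .
      moreover have "(\<ominus>\<^bsub>H\<^esub> g) a = \<ominus>\<^bsub>L\<^esub> y" using Hom_neg[OF gc] ac g(2) by (simp add: hneg_ap)
      ultimately show ?thesis by (intro image_eqI[where x="\<ominus>\<^bsub>H\<^esub> g"]) auto
    qed
    show "y \<oplus>\<^bsub>L\<^esub> y' \<in> (\<lambda>g. g a) ` G" if y: "y \<in> (\<lambda>g. g a) ` G" and y': "y' \<in> (\<lambda>g. g a) ` G" for y y'
    proof -
      obtain g where g: "g \<in> G" "y = g a" using y by auto
      obtain g' where g': "g' \<in> G" "y' = g' a" using y' by auto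
      have "g \<oplus>\<^bsub>H\<^esub> g' \<in> G" using Hm.submod_facts(5)[OF G g(1) g'(1)] .
      moreover have "(g \<oplus>\<^bsub>H\<^esub> g') a = y \<oplus>\<^bsub>L\<^esub> y'" using ac g(2) g'(2) by (simp add: Hom_add)
      ultimately show ?thesis by (intro image_eqI[where x="g \<oplus>\<^bsub>H\<^esub> g'"]) auto
    qed
    show "c \<odot>\<^bsub>L\<^esub> y \<in> (\<lambda>g. g a) ` G" if c: "c \<in> carrier R" and y: "y \<in> (\<lambda>g. g a) ` G" for c y
    proof -
      obtain g where g: "g \<in> G" "y = g a" using y by auto
      have "c \<odot>\<^bsub>H\<^esub> g \<in> G" using Hm.submod_facts(4)[OF G c g(1)] .
      moreover have "(c \<odot>\<^bsub>H\<^esub> g) a = c \<odot>\<^bsub>L\<^esub> y" using ac g(2) by (simp add: Hom_smult)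
      ultimately show ?thesis by (intro image_eqI[where x="c \<odot>\<^bsub>H\<^esub> g"]) auto
    qed
  qed
  have "\<zero>\<^bsub>L\<^esub> \<in> (\<lambda>g. g a) ` G" using L.submod_facts(2)[OF sub] .
  moreover have "(\<lambda>g. g a) ` G \<subseteq> NN"
  proof
    fix y assume "y \<in> (\<lambda>g. g a) ` G"
    then obtain g where g: "g \<in> G" "y = g a" by auto
    have gc: "g \<in> carrier H" using g Gc by auto
    show "y \<in> NN" unfolding annihilated_def using key[OF gc ac] hom_closed[OF gc ac] g(2) by auto
  qed
  ultimately show ?thesis unfolding L.adm_def using sub by auto
qed

lemma Hf_step:
  assumes asc: "set as \<subseteq> carrier A" and i: "i < length as"
  shows "subquot_length R H (Hf as (Suc i)) (Hf as i) \<le> subquot_length R L {\<zero>\<^bsub>L\<^esub>} NN"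
proof (rule Hm.len_le)
  fix k G assume G: "\<forall>j\<le>k. Hm.adm (Hf as (Suc i)) (Hf as i) (G j)" and st: "\<forall>j<k. G j \<subset> G (Suc j)"
  define a where "a = as ! i"
  have ac: "a \<in> carrier A" unfolding a_def using asc i nth_mem by blast
  define E where "E j = (\<lambda>g. g a) ` G j" for j
  have Gs: "submodule (G j) R H" if "j \<le> k" for j using G that unfolding Hm.adm_def by auto
  have admE: "\<forall>j\<le>k. L.adm {\<zero>\<^bsub>L\<^esub>} NN (E j)"
    unfolding E_def using image_adm[OF Gs ac] by auto
  have stE: "\<forall>j<k. E j \<subset> E (Suc j)"
  proof (intro allI impI)
    fix j assume j: "j < k"
    have sj: "G j \<subset> G (Suc j)" using st j by auto
    have Gj: "submodule (G j) R H" "submodule (G (Suc j)) R H" using Gs j by auto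
    have low: "Hf as (Suc i) \<subseteq> G j" and up: "G (Suc j) \<subseteq> Hf as i"
      using G j unfolding Hm.adm_def by (auto simp: Suc_le_eq)
    have sube: "E j \<subseteq> E (Suc j)" unfolding E_def using sj by auto
    show "E j \<subset> E (Suc j)"
    proof (rule ccontr)
      assume "\<not> E j \<subset> E (Suc j)"
      then have eq: "E (Suc j) = E j" using sube by auto
      obtain g' where g': "g' \<in> G (Suc j)" "g' \<notin> G j" using sj by auto
      have "g' a \<in> E j" using g' eq unfolding E_def by blast
      then obtain g where g: "g \<in> G j" "g a = g' a" unfolding E_def by auto
      have Hc: "G (Suc j) \<subseteq> carrier H" using Hm.submod_facts(1)[OF Gj(2)] .
      have gc: "g \<in> carrier H" "g' \<in> carrier H" using g g' sj Hc by auto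
      define d where "d = g' \<oplus>\<^bsub>H\<^esub> \<ominus>\<^bsub>H\<^esub> g"
      have gS: "g \<in> G (Suc j)" using g sj by auto
      have dS: "d \<in> G (Suc j)" unfolding d_def
        using Hm.submod_facts(5)[OF Gj(2) g'(1) Hm.submod_facts(3)[OF Gj(2) gS]] .
      have dv: "d x = g' x \<oplus>\<^bsub>L\<^esub> \<ominus>\<^bsub>L\<^esub> g x" if "x \<in> carrier A" for x
        using that unfolding d_def by (simp add: Hom_add Hom_neg[OF gc(1)] hneg_ap)
      have dc: "d \<in> carrier H" using dS Hc by auto
      have "d \<in> Hf as (Suc i)" unfolding Hf_def
      proof (intro CollectI conjI allI impI dc)
        fix l assume l: "l < Suc i" "l < length as"
        have lc: "as ! l \<in> carrier A" using asc l(2) nth_mem by blast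
        show "d (as ! l) = \<zero>\<^bsub>L\<^esub>"
        proof (cases "l < i")
          case True
          have "g' (as ! l) = \<zero>\<^bsub>L\<^esub>" "g (as ! l) = \<zero>\<^bsub>L\<^esub>"
            using g'(1) gS up True l(2) unfolding Hf_def by auto
          then show ?thesis using dv[OF lc] by simp
        next
          case False
          then have "l = i" using l by simp
          then show ?thesis using dv[OF lc] g(2) hom_closed[OF gc(2) lc] unfolding a_def by (simp add: L.r_neg)
        qed
      qed
      then have "d \<in> G j" using low by auto
      then have "d \<oplus>\<^bsub>H\<^esub> g \<in> G j" using Hm.submod_facts(5)[OF Gj(1) _ g(1)] by blast
      moreover have "d \<oplus>\<^bsub>H\<^esub> g = g'"
        unfolding d_def using gc by (simp add: Hm.M.a_assoc Hm.M.l_neg)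
      ultimately show False using g'(2) by simp
    qed
  qed
  show "enat k \<le> subquot_length R L {\<zero>\<^bsub>L\<^esub>} NN" by (rule L.len_ge[OF admE stE])
qed


lemma enat_Suc_mult: "enat (Suc i) * (x::enat) = x + enat i * x"
  by (simp add: eSuc_enat[symmetric] eSuc_plus_1 distrib_right add.commute)

lemma Hf_bound:
  assumes asc: "set as \<subseteq> carrier A"
  shows "i \<le> length as \<Longrightarrow> subquot_length R H (Hf as i) (carrier H) \<le> enat i * subquot_length R L {\<zero>\<^bsub>L\<^esub>} NN"
proof (induct i)
  case 0
  then show ?case by (simp add: Hf_0 Hm.len_refl)
next
  case (Suc i)
  have i: "i < length as" using Suc.prems by simp
  have s1: "submodule (Hf as (Suc i)) R H" "submodule (Hf as i) R H" using Hf_sub[OF asc] by auto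
  have s2: "submodule (carrier H) R H" by (rule Hm.carrier_is_submodule)
  have "subquot_length R H (Hf as (Suc i)) (carrier H)
        \<le> subquot_length R H (Hf as (Suc i)) (Hf as i) + subquot_length R H (Hf as i) (carrier H)"
    by (rule Hm.len_add[OF s1 s2 Hf_anti]) (use Hm.submod_facts(1)[OF s1(2)] in auto)
  also have "\<dots> \<le> subquot_length R L {\<zero>\<^bsub>L\<^esub>} NN + enat i * subquot_length R L {\<zero>\<^bsub>L\<^esub>} NN"
    by (intro add_mono Hf_step[OF asc i] Suc.hyps) (use i in auto)
  also have "\<dots> = enat (Suc i) * subquot_length R L {\<zero>\<^bsub>L\<^esub>} NN" by (simp add: enat_Suc_mult)
  finally show ?case .
qed

lemma zero_submod: "submodule {\<zero>\<^bsub>L\<^esub>} R L"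
  by (rule L.submoduleI) auto

lemma main_bound:
  "mod_length R H (carrier H) \<le> beta0 R m A * mod_length R L NN"
proof (cases "beta0 R m A")
  case (enat b)
  then have lb: "subquot_length R A mA (carrier A) = enat b" unfolding beta0_def .
  obtain as where as: "length as \<le> b" "set as \<subseteq> carrier A" "A.gen (mA \<union> set as) = carrier A"
    using A.gens_exist[OF mA_sub lb] by blast
  have "mod_length R H (carrier H) = subquot_length R H (Hf as (length as)) (carrier H)"
    unfolding mod_length_def using Hf_last[OF as(2,3)] by simp
  also have "\<dots> \<le> enat (length as) * subquot_length R L {\<zero>\<^bsub>L\<^esub>} NN"
    by (rule Hf_bound[OF as(2)]) simp
  also have "\<dots> \<le> enat b * subquot_length R L {\<zero>\<^bsub>L\<^esub>} NN"
    using as(1) by (intro mult_right_mono) auto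
  finally show ?thesis unfolding mod_length_def enat .
next
  case infinity
  show ?thesis
  proof (cases "mod_length R L NN = 0")
    case False
    then show ?thesis using infinity by (simp add: imult_infinity)
  next
    case True
    have NN0: "NN = {\<zero>\<^bsub>L\<^esub>}"
    proof (rule ccontr)
      assume ne: "NN \<noteq> {\<zero>\<^bsub>L\<^esub>}"
      have zN: "\<zero>\<^bsub>L\<^esub> \<in> NN" using L.submod_facts(2)[OF NN_sub] .
      define g where "g j = (if j = 0 then {\<zero>\<^bsub>L\<^esub>} else NN)" for j :: nat
      have "\<forall>j\<le>1. L.adm {\<zero>\<^bsub>L\<^esub>} NN (g j)"
        unfolding g_def L.adm_def using zero_submod NN_sub zN by auto
      moreover have "\<forall>j<1. g j \<subset> g (Suc j)" unfolding g_def using ne zN by auto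
      ultimately have "enat 1 \<le> subquot_length R L {\<zero>\<^bsub>L\<^esub>} NN" by (rule L.len_ge)
      then show False using True unfolding mod_length_def by (simp add: zero_enat_def)
    qed
    have "carrier H = {\<zero>\<^bsub>H\<^esub>}"
    proof
      show "carrier H \<subseteq> {\<zero>\<^bsub>H\<^esub>}"
      proof
        fix f assume f: "f \<in> carrier H"
        have "f x = \<zero>\<^bsub>H\<^esub> x" if x: "x \<in> carrier A" for x
        proof -
          have "f x \<in> NN" unfolding annihilated_def using key[OF f x] hom_closed[OF f x] by auto
          then show ?thesis using NN0 x by (simp add: Hom_zero)
        qed
        then show "f \<in> {\<zero>\<^bsub>H\<^esub>}" using hom_eqI[OF f Hom_zero_closed] by auto
      qed
      show "{\<zero>\<^bsub>H\<^esub>} \<subseteq> carrier H" using Hom_zero_closed by auto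
    qed
    then have "mod_length R H (carrier H) = 0" unfolding mod_length_def by (simp add: Hm.len_refl)
    then show ?thesis by simp
  qed
qed

end


theorem theorem2p11:
  fixes R :: "('a, 'c) ring_scheme" and m :: "'a set"
    and A :: "('a, 'd) module" and L :: "('a, 'b) module"
    and n t s :: nat
  assumes "noeth_local_ring R m"
    and "module R A" and "module R L"
    and "artinian_module R A"
    and "n \<ge> 1"
    and "mod_ideal_prod R L (ideal_power R m n) (Gamma R m L) = {\<zero>\<^bsub>L\<^esub>}"
    and "mod_ideal_prod R A (ideal_power R m t) (carrier A)
         = mod_ideal_prod R A (ideal_power R m (Suc t)) (carrier A)"
    and "s \<ge> min n t"
  shows "mod_length R (Hom_mod R A L) (carrier (Hom_mod R A L))
         \<le> beta0 R m A * mod_length R L (annihilated L (ideal_power R m s))"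
proof -
  have loc: "cring R" "noetherian_ring R" "maximalideal m R" "\<And>I. maximalideal I R \<Longrightarrow> I = m"
    using assms(1) unfolding noeth_local_ring_def by auto
  have "mainctx R m A L n t s"
  proof (rule mainctx.intro)
    show "lring R m" by (rule lring.intro[OF loc(1) lring_axioms.intro[OF loc(3) loc(4)]])
    show "twomod R A L" unfolding twomod_def umod_def using assms(2,3) by (rule conjI)
    show "mainctx_axioms R m A L n t s"
      by (rule mainctx_axioms.intro[OF loc(2) assms(4) assms(6) assms(7) assms(8)])
  qed
  then show ?thesis by (rule mainctx.main_bound)
qed


end
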